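(* Let $K$ be as in the context, $\mathbf{p_0},\mathbf{p_1}\in(0,1)^N$ with $p_1(i)\ge p_0(i)$ for all $i$ and $\mu\cdot\mathbf{p_1}>\mu\cdot\mathbf{p_0}=1/2$, and let $\eta$ be an arbitrary distribution on $\mathcal R$. For $\varepsilon\in(0,1]$ let $\hat\delta_\varepsilon=\delta(\hat{\mathbf p},\hat K_\varepsilon,\hat\eta_\varepsilon)$. Then $$\hat\delta_\varepsilon=\delta(\mathbf{p_0},K,\eta)+\frac{4\,\eta\cdot\Big(\sum_{j=1}^\infty(1-\varepsilon)^jK^{j-1}(\mathbf{p_1}-\mathbf{p_0})\Big)}{\nu(\mathbf{p_0},K)}.$$ In particular, $\varepsilon\mapsto\hat\delta_\varepsilon$ is a continuous strictly decreasing function on $(0,1]$ which equals $\delta(\mathbf{p_0},K,\eta)$ at $\varepsilon=1$, and $\lim_{\varepsilon\downarrow0}\hat\delta_\varepsilon=\infty$.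
   Context: Let $\mathcal R=\{1,\dots,N\}$ and let $K$ be a stochastic matrix on $\mathcal R$ whose Markov chain has a unique closed irreducible subset $\mathcal R_0$ and unique stationary distribution $\mu$ (row vector). For a stochastic matrix $Q$ on a finite set having a unique closed irreducible subset with stationary distribution $m$, a vector $\mathbf q$ with entries in $(0,1)$ satisfying $m\cdot\mathbf q=1/2$, and a distribution $\zeta$, define $\mathbf r(\mathbf q,Q)=(I-Q+2(\mathbf 1-\mathbf q)\,m\,D_{1-q}Q)^{-1}\mathbf q-\mathbf 1$, $\nu(\mathbf q,Q)=2+4\,m\,D_qQ\,\mathbf r(\mathbf q,Q)$ and $\delta(\mathbf q,Q,\zeta)=2\,\zeta\cdot\mathbf r(\mathbf q,Q)/\nu(\mathbf q,Q)$, where $\mathbf 1$ is the all-ones column vector, $D_q$ is diagonal with entries $q(i)$, $D_{1-q}=I-D_q$. On $\{1,\dots,2N\}$ define the $2N\times2N$ block matrix $\hat K_\varepsilon=\begin{pmatrix}(1-\varepsilon)K&\varepsilon K\\ O_N&K\end{pmatrix}$ ($O_N$ the $N\times N$ zero matrix), the column vector $\hat{\mathbf p}=\begin{pmatrix}\mathbf{p_1}\\ \mathbf{p_0}\end{pmatrix}$, and the distribution $\hat\eta_\varepsilon=((1-\varepsilon)\eta,\varepsilon\eta)$. The stationary distribution of $\hat K_\varepsilon$ is $(\mathbf 0,\mu)$, so $\hat{\mathbf p}$ is critical for $\hat K_\varepsilon$. *)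

theory Defs
  imports "HOL-Analysis.Analysis" "Jordan_Normal_Form.Matrix"
begin

(* Real N x N matrices and vectors of length N are Jordan_Normal_Form's "real mat" / "real vec",
   states indexed 0..N-1.  Row vectors (distributions) are also "real vec"; the row-vector/matrix
   product m Q is written row_mult m Q = Q^T m. *)

definition row_mult :: "real vec \<Rightarrow> real mat \<Rightarrow> real vec" where
  "row_mult m Q = transpose_mat Q *\<^sub>v m"

definition ones_vec :: "nat \<Rightarrow> real vec" where
  "ones_vec n = vec n (\<lambda>_. 1)"

definition diag_vec :: "real vec \<Rightarrow> real mat" where
  "diag_vec q = mat_diag (dim_vec q) (\<lambda>i. q $ i)"

definition outer_prod :: "real vec \<Rightarrow> real vec \<Rightarrow> real mat" where
  "outer_prod u w = mat (dim_vec u) (dim_vec w) (\<lambda>(i,j). u $ i * w $ j)"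

definition mat_inv :: "real mat \<Rightarrow> real mat" where
  "mat_inv A = (THE B. B \<in> carrier_mat (dim_row A) (dim_row A) \<and>
       A * B = 1\<^sub>m (dim_row A) \<and> B * A = 1\<^sub>m (dim_row A))"

definition stochastic_mat :: "real mat \<Rightarrow> bool" where
  "stochastic_mat Q \<longleftrightarrow> Q \<in> carrier_mat (dim_row Q) (dim_row Q) \<and>
     (\<forall>i < dim_row Q. \<forall>j < dim_row Q. Q $$ (i,j) \<ge> 0) \<and>
     (\<forall>i < dim_row Q. (\<Sum>j < dim_row Q. Q $$ (i,j)) = 1)"

definition trans_rel :: "real mat \<Rightarrow> (nat \<times> nat) set" where
  "trans_rel Q = {(i,j). i < dim_row Q \<and> j < dim_row Q \<and> Q $$ (i,j) > 0}"

definition closed_irreducible :: "real mat \<Rightarrow> nat set \<Rightarrow> bool" where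
  "closed_irreducible Q C \<longleftrightarrow> C \<noteq> {} \<and> C \<subseteq> {..<dim_row Q} \<and>
     (\<forall>i\<in>C. \<forall>j < dim_row Q. Q $$ (i,j) > 0 \<longrightarrow> j \<in> C) \<and>
     (\<forall>i\<in>C. \<forall>j\<in>C. (i,j) \<in> (trans_rel Q)\<^sup>*)"

definition is_distribution :: "nat \<Rightarrow> real vec \<Rightarrow> bool" where
  "is_distribution n m \<longleftrightarrow> dim_vec m = n \<and> (\<forall>i<n. m $ i \<ge> 0) \<and> (\<Sum>i<n. m $ i) = 1"

definition stationary :: "real mat \<Rightarrow> real vec \<Rightarrow> bool" where
  "stationary Q m \<longleftrightarrow> is_distribution (dim_row Q) m \<and> row_mult m Q = m"

definition stat_dist :: "real mat \<Rightarrow> real vec" where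
  "stat_dist Q = (THE m. stationary Q m)"

definition r_vec :: "real vec \<Rightarrow> real mat \<Rightarrow> real vec" where
  "r_vec q Q = (let n = dim_row Q; m = stat_dist Q; q1 = ones_vec n - q in
     mat_inv (1\<^sub>m n - Q + outer_prod (2 \<cdot>\<^sub>v q1) (row_mult m (diag_vec q1 * Q))) *\<^sub>v q
     - ones_vec n)"

definition nu :: "real vec \<Rightarrow> real mat \<Rightarrow> real" where
  "nu q Q = 2 + 4 * (row_mult (stat_dist Q) (diag_vec q * Q) \<bullet> r_vec q Q)"

definition delta :: "real vec \<Rightarrow> real mat \<Rightarrow> real vec \<Rightarrow> real" where
  "delta q Q \<zeta> = 2 * (\<zeta> \<bullet> r_vec q Q) / nu q Q"

definition hatK :: "real mat \<Rightarrow> real \<Rightarrow> real mat" where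
  "hatK K \<epsilon> = four_block_mat ((1 - \<epsilon>) \<cdot>\<^sub>m K) (\<epsilon> \<cdot>\<^sub>m K) (0\<^sub>m (dim_row K) (dim_row K)) K"

definition hatp :: "real vec \<Rightarrow> real vec \<Rightarrow> real vec" where
  "hatp p1 p0 = p1 @\<^sub>v p0"

definition hateta :: "real vec \<Rightarrow> real \<Rightarrow> real vec" where
  "hateta \<eta> \<epsilon> = ((1 - \<epsilon>) \<cdot>\<^sub>v \<eta>) @\<^sub>v (\<epsilon> \<cdot>\<^sub>v \<eta>)"

end

theory Submission
  imports Defs "Jordan_Normal_Form.Determinant"
begin
unbundle no vec_syntax


lemma mv_index:
  assumes "Q \<in> carrier_mat n n" "x \<in> carrier_vec n" "i < n"
  shows "(Q *\<^sub>v x) $ i = (\<Sum>j<n. Q $$ (i,j) * x $ j)"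
  using assms by (auto simp: index_mult_mat_vec scalar_prod_def atLeast0LessThan intro!: sum.cong)

declare index_mult_mat_vec[simp del]

lemma sum_lin3: "(\<Sum>i\<in>S. f i - g i + c * h i :: real) = sum f S - sum g S + c * sum h S"
  by (simp add: sum.distrib sum_subtractf sum_distrib_left)

lemma ones_index[simp]: "i < n \<Longrightarrow> ones_vec n $ i = 1" "dim_vec (ones_vec n) = n"
  "ones_vec n \<in> carrier_vec n"
  by (auto simp: ones_vec_def)

locale stoch =
  fixes n :: nat and Q :: "real mat"
  assumes Qc: "Q \<in> carrier_mat n n"
  and Qnn: "\<And>i j. i<n \<Longrightarrow> j<n \<Longrightarrow> Q $$ (i,j) \<ge> 0"
  and Qrow: "\<And>i. i<n \<Longrightarrow> (\<Sum>j<n. Q$$(i,j)) = 1"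
begin

lemma dimQ[simp]: "dim_row Q = n" "dim_col Q = n" using Qc by auto

lemma mv: "x \<in> carrier_vec n \<Longrightarrow> i < n \<Longrightarrow> (Q *\<^sub>v x) $ i = (\<Sum>j<n. Q $$ (i,j) * x $ j)"
  using mv_index[OF Qc] by blast

lemma mv_le: assumes "x \<in> carrier_vec n" "\<And>j. j<n \<Longrightarrow> x$j \<le> B" "i<n"
  shows "(Q *\<^sub>v x) $ i \<le> B"
proof -
  have "(Q *\<^sub>v x) $ i = (\<Sum>j<n. Q $$ (i,j) * x $ j)" using mv assms by blast
  also have "\<dots> \<le> (\<Sum>j<n. Q $$ (i,j) * B)"
    by (rule sum_mono) (simp add: assms Qnn mult_left_mono)
  also have "\<dots> = B" using Qrow[OF assms(3)] by (simp add: sum_distrib_right[symmetric])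
  finally show ?thesis .
qed

lemma mv_ge: assumes "x \<in> carrier_vec n" "\<And>j. j<n \<Longrightarrow> x$j \<ge> B" "i<n"
  shows "(Q *\<^sub>v x) $ i \<ge> B"
proof -
  have "(Q *\<^sub>v x) $ i = (\<Sum>j<n. Q $$ (i,j) * x $ j)" using mv assms by blast
  also have "\<dots> \<ge> (\<Sum>j<n. Q $$ (i,j) * B)"
    by (rule sum_mono) (simp add: assms Qnn mult_left_mono)
  also have "(\<Sum>j<n. Q $$ (i,j) * B) = B" using Qrow[OF assms(3)] by (simp add: sum_distrib_right[symmetric])
  finally show ?thesis .
qed

lemma mv_abs: assumes "x \<in> carrier_vec n" "\<And>j. j<n \<Longrightarrow> \<bar>x$j\<bar> \<le> B" "i<n"
  shows "\<bar>(Q *\<^sub>v x) $ i\<bar> \<le> B"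
proof -
  have l: "-B \<le> x$j \<and> x$j \<le> B" if "j<n" for j using assms(2)[OF that] by arith
  have "(Q *\<^sub>v x) $ i \<le> B" by (rule mv_le) (use assms l in auto)
  moreover have "(Q *\<^sub>v x) $ i \<ge> -B" by (rule mv_ge) (use assms l in auto)
  ultimately show ?thesis by auto
qed

lemma closed_argmax:
  assumes x: "x \<in> carrier_vec n" and h: "Q *\<^sub>v x = x" and i: "i<n" and j: "j<n"
    and xi: "x$i = M" and le: "\<And>k. k<n \<Longrightarrow> x$k \<le> M" and pos: "Q$$(i,j) > 0"
  shows "x$j = M"
proof -
  have "(\<Sum>k<n. Q$$(i,k) * (M - x$k)) = M * (\<Sum>k<n. Q$$(i,k)) - (\<Sum>k<n. Q$$(i,k) * x$k)"
    by (simp add: algebra_simps sum_subtractf sum_distrib_left)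
  also have "\<dots> = M - x$i" using Qrow[OF i] mv[OF x i] h by simp
  finally have "(\<Sum>k<n. Q$$(i,k) * (M - x$k)) = 0" using xi by simp
  moreover have "\<forall>k\<in>{..<n}. Q$$(i,k) * (M - x$k) \<ge> 0" using Qnn i le by simp
  ultimately have "\<forall>k\<in>{..<n}. Q$$(i,k) * (M - x$k) = 0"
    using sum_nonneg_eq_0_iff[of "{..<n}" "\<lambda>k. Q$$(i,k) * (M - x$k)"] by blast
  hence "Q$$(i,j) * (M - x$j) = 0" using j by blast
  thus ?thesis using pos le[OF j] by simp
qed

lemma reach_sub:
  assumes cl: "\<forall>i\<in>S. \<forall>j<n. Q$$(i,j)>0 \<longrightarrow> j\<in>S"
    and r: "(i,j) \<in> (trans_rel Q)\<^sup>*" and iS: "i\<in>S"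
  shows "j\<in>S"
  using r iS by (induction rule: rtrancl_induct) (auto simp: trans_rel_def cl)

lemma reach_lt: "(i,j) \<in> (trans_rel Q)\<^sup>* \<Longrightarrow> i < n \<Longrightarrow> j < n"
  by (induction rule: rtrancl_induct) (auto simp: trans_rel_def)

lemma closed_contains_class:
  assumes Sn: "S \<subseteq> {..<n}" and ne: "S \<noteq> {}"
    and cl: "\<And>i j. i\<in>S \<Longrightarrow> j<n \<Longrightarrow> Q$$(i,j)>0 \<Longrightarrow> j\<in>S"
  shows "\<exists>C\<subseteq>S. closed_irreducible Q C"
proof -
  define R where "R i = {j. (i,j) \<in> (trans_rel Q)\<^sup>*}" for i
  have clA: "\<forall>i\<in>S. \<forall>j<n. Q$$(i,j)>0 \<longrightarrow> j\<in>S" using cl by blast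
  have RS: "R i \<subseteq> S" if "i \<in> S" for i using reach_sub[OF clA _ that] unfolding R_def by blast
  have fin: "finite (R i)" if "i \<in> S" for i
  proof -
    have "R i \<subseteq> {..<n}" using RS[OF that] Sn by (rule order.trans)
    thus ?thesis by (rule finite_subset) simp
  qed
  obtain i1 where "i1 \<in> S" using ne by blast
  from ex_has_least_nat[of "\<lambda>i. i \<in> S" i1 "\<lambda>i. card (R i)", OF this]
  obtain i0 where i0: "i0 \<in> S" and min: "\<And>j. j \<in> S \<Longrightarrow> card (R i0) \<le> card (R j)" by blast
  have "closed_irreducible Q (R i0)"
    unfolding closed_irreducible_def
  proof (intro conjI ballI allI impI)
    show "R i0 \<noteq> {}" unfolding R_def by blast
    show "R i0 \<subseteq> {..<dim_row Q}" using RS[OF i0] Sn by auto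
  next
    fix i j assume iR: "i \<in> R i0" and j: "j < dim_row Q" and p: "Q $$ (i,j) > 0"
    have "i < n" using RS[OF i0] iR Sn by auto
    hence "(i,j) \<in> trans_rel Q" using j p by (simp add: trans_rel_def)
    thus "j \<in> R i0" using iR unfolding R_def by (simp add: rtrancl_into_rtrancl)
  next
    fix i j assume iR: "i \<in> R i0" and jR: "j \<in> R i0"
    have iS: "i \<in> S" using RS[OF i0] iR by auto
    have sub: "R i \<subseteq> R i0" using iR unfolding R_def by (auto intro: rtrancl_trans)
    have "card (R i0) \<le> card (R i)" using min[OF iS] .
    hence "R i = R i0" using card_subset_eq[OF fin[OF i0] sub] card_mono[OF fin[OF i0] sub] by linarith
    thus "(i,j) \<in> (trans_rel Q)\<^sup>*" using jR unfolding R_def by blast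
  qed
  thus ?thesis using RS[OF i0] by blast
qed

lemma harm_max_on_class:
  assumes uC: "closed_irreducible Q C0" "\<And>C. closed_irreducible Q C \<Longrightarrow> C = C0"
    and x: "x \<in> carrier_vec n" and h: "Q *\<^sub>v x = x" and np: "n > 0"
  shows "\<forall>i\<in>C0. \<forall>k<n. x$k \<le> x$i"
proof -
  define M where "M = Max ((\<lambda>k. x$k) ` {..<n})"
  have le: "x$k \<le> M" if "k<n" for k unfolding M_def using that by auto
  have "M \<in> (\<lambda>k. x$k) ` {..<n}" unfolding M_def using np by (intro Max_in) auto
  then obtain k0 where k0: "k0 < n" "x$k0 = M" by auto
  define S where "S = {k. k<n \<and> x$k = M}"
  have Ssub: "S \<subseteq> {..<n}" by (auto simp: S_def)
  have Sne: "S \<noteq> {}" using k0 by (auto simp: S_def)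
  have Scl: "j\<in>S" if "i\<in>S" "j<n" "Q$$(i,j)>0" for i j
  proof -
    have "i<n" "x$i = M" using that(1) by (auto simp: S_def)
    hence "x$j = M" using closed_argmax[OF x h \<open>i<n\<close> \<open>j<n\<close> \<open>x$i = M\<close> le \<open>Q$$(i,j)>0\<close>] by blast
    thus "j\<in>S" using \<open>j<n\<close> by (simp add: S_def)
  qed
  have "\<exists>C\<subseteq>S. closed_irreducible Q C" by (rule closed_contains_class[OF Ssub Sne Scl])
  then obtain C where "C \<subseteq> S" "closed_irreducible Q C" by blast
  hence "C0 \<subseteq> S" using uC by auto
  thus ?thesis using le unfolding S_def by auto
qed

lemma harmonic_const:
  assumes uC: "\<exists>!C. closed_irreducible Q C"
  shows "\<forall>x\<in>carrier_vec n. Q *\<^sub>v x = x \<longrightarrow> (\<exists>c. \<forall>i<n. x$i = c)"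
proof (intro ballI impI)
  fix x :: "real vec" assume x: "x \<in> carrier_vec n" and h: "Q *\<^sub>v x = x"
  show "\<exists>c. \<forall>i<n. x$i = c"
  proof (cases "n = 0")
    case True thus ?thesis by auto
  next
    case False
    obtain C0 where C0: "closed_irreducible Q C0" "\<And>C. closed_irreducible Q C \<Longrightarrow> C = C0"
      using uC by blast
    obtain i0 where i0: "i0 \<in> C0" using C0(1) unfolding closed_irreducible_def by blast
    have "i0 < n" using C0(1) i0 unfolding closed_irreducible_def by auto
    have mx: "x$k \<le> x$i0" if "k<n" for k using harm_max_on_class[OF C0 x h] False i0 that by auto
    have mx2: "x$k \<ge> x$i0" if "k<n" for k
    proof -
      have hx: "Q *\<^sub>v (-x) = -x"
      proof
        fix i assume "i < dim_vec (-x)"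
        hence i: "i < n" using x by auto
        have "(Q *\<^sub>v (-x)) $ i = (\<Sum>j<n. Q $$ (i,j) * (-x) $ j)" using mv[of "-x" i] x i by auto
        also have "\<dots> = - (\<Sum>j<n. Q $$ (i,j) * x $ j)" using x by (simp add: sum_negf)
        also have "\<dots> = - x $ i" using mv[OF x i] h by simp
        finally show "(Q *\<^sub>v (-x)) $ i = (-x) $ i" using i x by simp
      qed (use x in auto)
      have "(-x)$k \<le> (-x)$i0" using harm_max_on_class[OF C0 _ hx] x False i0 that by auto
      thus ?thesis using x that \<open>i0 < n\<close> by simp
    qed
    show ?thesis using mx mx2 by (intro exI[of _ "x$i0"]) (auto intro: order.antisym)
  qed
qed

end


lemma row_mult_index:
  assumes "P \<in> carrier_mat n n" "m \<in> carrier_vec n" "j < n"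
  shows "row_mult m P $ j = (\<Sum>k<n. P $$ (k,j) * m $ k)"
  using assms unfolding row_mult_def by (auto simp: index_mult_mat_vec scalar_prod_def atLeast0LessThan intro!: sum.cong)

lemma dim_row_mult[simp]: "dim_vec (row_mult m P) = dim_col P"
  unfolding row_mult_def by simp

lemma sprod_index: "w \<in> carrier_vec n \<Longrightarrow> v \<bullet> w = (\<Sum>k<n. v $ k * w $ k)"
  by (auto simp: scalar_prod_def atLeast0LessThan)

context stoch
begin

lemma diag_mult_c: assumes "v \<in> carrier_vec n" shows "diag_vec v * Q \<in> carrier_mat n n"
  using assms mat_diag_mult_left[OF Qc, of "\<lambda>i. v$i"] by (auto simp: diag_vec_def)

lemma diag_mult_index:
  assumes "v \<in> carrier_vec n" "i<n" "j<n"
  shows "(diag_vec v * Q) $$ (i,j) = v$i * Q$$(i,j)"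
  using assms mat_diag_mult_left[OF Qc, of "\<lambda>i. v$i"] by (auto simp: diag_vec_def)

lemma rowdiag:
  assumes v: "v \<in> carrier_vec n" and m: "m \<in> carrier_vec n" and x: "x \<in> carrier_vec n"
  shows "row_mult m (diag_vec v * Q) \<bullet> x = (\<Sum>k<n. m$k * v$k * (Q *\<^sub>v x)$k)"
proof -
  have "row_mult m (diag_vec v * Q) \<bullet> x = (\<Sum>j<n. row_mult m (diag_vec v * Q) $ j * x $ j)"
    using sprod_index[OF x] by blast
  also have "\<dots> = (\<Sum>j<n. (\<Sum>k<n. v$k * Q$$(k,j) * m $ k) * x $ j)"
    by (rule sum.cong) (simp_all add: row_mult_index[OF diag_mult_c[OF v] m] diag_mult_index[OF v])
  also have "\<dots> = (\<Sum>j<n. \<Sum>k<n. v$k * Q$$(k,j) * m $ k * x $ j)"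
    by (simp add: sum_distrib_right)
  also have "\<dots> = (\<Sum>k<n. \<Sum>j<n. v$k * Q$$(k,j) * m $ k * x $ j)"
    by (rule sum.swap)
  also have "\<dots> = (\<Sum>k<n. m$k * v$k * (\<Sum>j<n. Q$$(k,j) * x $ j))"
    by (simp add: sum_distrib_left mult_ac)
  also have "\<dots> = (\<Sum>k<n. m$k * v$k * (Q *\<^sub>v x)$k)"
    by (rule sum.cong) (simp_all add: mv[OF x])
  finally show ?thesis .
qed

lemma mv_ones: "i<n \<Longrightarrow> (Q *\<^sub>v ones_vec n) $ i = 1"
  using mv[of "ones_vec n" i] Qrow by simp

lemma mv_add: "x \<in> carrier_vec n \<Longrightarrow> y \<in> carrier_vec n \<Longrightarrow> i<n \<Longrightarrow>
  (Q *\<^sub>v (x + y)) $ i = (Q *\<^sub>v x) $ i + (Q *\<^sub>v y) $ i"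
  by (simp add: mv sum.distrib algebra_simps del: index_mult_mat_vec)

lemma mv_sub: "x \<in> carrier_vec n \<Longrightarrow> y \<in> carrier_vec n \<Longrightarrow> i<n \<Longrightarrow>
  (Q *\<^sub>v (x - y)) $ i = (Q *\<^sub>v x) $ i - (Q *\<^sub>v y) $ i"
  by (simp add: mv sum_subtractf algebra_simps del: index_mult_mat_vec)

lemma mv_smult: "x \<in> carrier_vec n \<Longrightarrow> i<n \<Longrightarrow>
  (Q *\<^sub>v (c \<cdot>\<^sub>v x)) $ i = c * (Q *\<^sub>v x) $ i"
  by (simp add: mv sum_distrib_left algebra_simps del: index_mult_mat_vec)

end

locale stoch_r = stoch +
  fixes m q :: "real vec"
  assumes m_dist: "is_distribution n m"
  and m_stat: "row_mult m Q = m"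
  and sd: "stat_dist Q = m"
  and harm: "\<forall>x\<in>carrier_vec n. Q *\<^sub>v x = x \<longrightarrow> (\<exists>c. \<forall>i<n. x$i = c)"
  and qc: "q \<in> carrier_vec n"
  and mq: "m \<bullet> q = 1/2"
begin

lemma mc: "m \<in> carrier_vec n" using m_dist unfolding is_distribution_def carrier_vec_def by auto

lemma m_sum: "(\<Sum>i<n. m$i) = 1" using m_dist unfolding is_distribution_def by auto
lemma m_nn: "i<n \<Longrightarrow> m$i \<ge> 0" using m_dist unfolding is_distribution_def by auto

lemma mq_sum: "(\<Sum>i<n. m$i * q$i) = 1/2" using mq sprod_index[OF qc] by simp

lemma m1q: "(\<Sum>i<n. m$i * (1 - q$i)) = 1/2"
  using m_sum mq_sum by (simp add: algebra_simps sum_subtractf)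

lemma m_stat_idx: "j<n \<Longrightarrow> (\<Sum>k<n. Q$$(k,j) * m$k) = m$j"
proof -
  assume j: "j<n"
  have "row_mult m Q $ j = m $ j" using m_stat by simp
  thus ?thesis using row_mult_index[OF Qc mc j] by simp
qed

lemma mQ_fun: "(\<Sum>i<n. m$i * (\<Sum>j<n. Q$$(i,j) * g j)) = (\<Sum>j<n. m$j * g j)"
proof -
  have "(\<Sum>i<n. m$i * (\<Sum>j<n. Q$$(i,j) * g j)) = (\<Sum>i<n. \<Sum>j<n. Q$$(i,j) * m$i * g j)"
    by (simp add: sum_distrib_left mult_ac)
  also have "\<dots> = (\<Sum>j<n. \<Sum>i<n. Q$$(i,j) * m$i * g j)" by (rule sum.swap)
  also have "\<dots> = (\<Sum>j<n. (\<Sum>i<n. Q$$(i,j) * m$i) * g j)"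
    by (simp add: sum_distrib_right)
  also have "\<dots> = (\<Sum>j<n. m$j * g j)" by (rule sum.cong) (simp_all add: m_stat_idx)
  finally show ?thesis .
qed

lemma mQ: assumes x: "x \<in> carrier_vec n" shows "(\<Sum>i<n. m$i * (Q *\<^sub>v x)$i) = (\<Sum>j<n. m$j * x$j)"
proof -
  have "(\<Sum>i<n. m$i * (Q *\<^sub>v x)$i) = (\<Sum>i<n. m$i * (\<Sum>j<n. Q$$(i,j) * x$j))"
    by (rule sum.cong) (simp_all add: mv[OF x])
  thus ?thesis using mQ_fun[of "\<lambda>j. x$j"] by simp
qed

definition q1 where "q1 = ones_vec n - q"
definition w where "w = row_mult m (diag_vec q1 * Q)"
definition A where "A = 1\<^sub>m n - Q + outer_prod (2 \<cdot>\<^sub>v q1) w"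
definition Wf where "Wf x = (\<Sum>k<n. m$k * (1 - q$k) * (Q *\<^sub>v x)$k)"

lemma q1c: "q1 \<in> carrier_vec n" unfolding q1_def using qc by simp
lemma q1i: "i<n \<Longrightarrow> q1 $ i = 1 - q$i" unfolding q1_def using qc by simp

lemma wc: "w \<in> carrier_vec n"
proof -
  have "dim_col (diag_vec q1 * Q) = n" using diag_mult_c[OF q1c] by (rule carrier_matD(2))
  thus ?thesis unfolding w_def by (intro carrier_vecI) simp
qed

lemma w_dot: assumes x: "x \<in> carrier_vec n" shows "w \<bullet> x = Wf x"
proof -
  have "w \<bullet> x = (\<Sum>k<n. m$k * q1$k * (Q *\<^sub>v x)$k)" unfolding w_def by (rule rowdiag[OF q1c mc x])
  also have "\<dots> = Wf x" unfolding Wf_def by (rule sum.cong) (simp_all add: q1i)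
  finally show ?thesis .
qed

lemma Ac: "A \<in> carrier_mat n n" unfolding A_def using q1c wc by (auto simp: outer_prod_def)

lemma A_mv: assumes x: "x \<in> carrier_vec n" and i: "i<n"
  shows "(A *\<^sub>v x) $ i = x$i - (Q *\<^sub>v x)$i + 2 * (1 - q$i) * Wf x"
proof -
  have Aij: "A $$ (i,j) = (if i = j then 1 else 0) - Q$$(i,j) + 2*(1 - q$i) * w$j" if "j<n" for j
    unfolding A_def using i that q1c wc q1i[OF i] by (auto simp: outer_prod_def)
  have "(A *\<^sub>v x) $ i = (\<Sum>j<n. A $$ (i,j) * x$j)" using mv_index[OF Ac x i] .
  also have "\<dots> = (\<Sum>j<n. (if i = j then x$j else 0) - Q$$(i,j) * x$j + 2*(1 - q$i) * (w$j * x$j))"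
    by (rule sum.cong) (auto simp: Aij algebra_simps)
  also have "\<dots> = x$i - (\<Sum>j<n. Q$$(i,j) * x$j) + 2*(1 - q$i) * (\<Sum>j<n. w$j * x$j)"
    using i by (simp add: sum.distrib sum_subtractf sum_distrib_left)
  also have "(\<Sum>j<n. w$j * x$j) = Wf x" using w_dot[OF x] sprod_index[OF x] by simp
  finally show ?thesis using mv[OF x i] by simp
qed

lemma Wf_add: "x \<in> carrier_vec n \<Longrightarrow> y \<in> carrier_vec n \<Longrightarrow> Wf (x + y) = Wf x + Wf y"
  unfolding Wf_def by (simp add: mv_add distrib_left sum.distrib)

lemma Wf_ones: "Wf (ones_vec n) = 1/2"
  unfolding Wf_def using m1q by (simp add: mv_ones)

lemma A_inj: assumes x: "x \<in> carrier_vec n" and Ax: "A *\<^sub>v x = 0\<^sub>v n" shows "x = 0\<^sub>v n"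
proof -
  have e: "x$i - (Q *\<^sub>v x)$i + 2 * (1 - q$i) * Wf x = 0" if "i<n" for i
  proof -
    have "(A *\<^sub>v x) $ i = 0" using Ax that by simp
    thus ?thesis using A_mv[OF x that] by simp
  qed
  have "(\<Sum>i<n. m$i * x$i - m$i * (Q *\<^sub>v x)$i + (2 * Wf x) * (m$i * (1 - q$i)))
     = (\<Sum>i<n. m$i * (x$i - (Q *\<^sub>v x)$i + 2 * (1 - q$i) * Wf x))"
    by (rule sum.cong) (simp_all add: algebra_simps)
  also have "\<dots> = 0" using e by simp
  finally have "(\<Sum>i<n. m$i * x$i - m$i * (Q *\<^sub>v x)$i + (2 * Wf x) * (m$i * (1 - q$i))) = 0" .
  hence "(\<Sum>i<n. m$i * x$i) - (\<Sum>i<n. m$i * (Q *\<^sub>v x)$i) + 2 * Wf x * (\<Sum>i<n. m$i * (1 - q$i)) = 0"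
    by (simp only: sum_lin3)
  hence W0: "Wf x = 0" using mQ[OF x] m1q by simp
  have "Q *\<^sub>v x = x"
  proof
    fix i assume "i < dim_vec x" thus "(Q *\<^sub>v x) $ i = x $ i" using e[of i] W0 x by auto
  qed (use x in auto)
  then obtain c where c: "\<forall>i<n. x$i = c" using harm x by blast
  have xc: "x = c \<cdot>\<^sub>v ones_vec n" using x c by (intro eq_vecI) auto
  have "Wf x = c * Wf (ones_vec n)" unfolding xc Wf_def by (simp add: mv_smult sum_distrib_left algebra_simps)
  hence "c = 0" using W0 Wf_ones by simp
  thus ?thesis using xc by auto
qed

lemma A_inverse: obtains B where "B \<in> carrier_mat n n" "A * B = 1\<^sub>m n" "B * A = 1\<^sub>m n" "mat_inv A = B"
proof -
  have "Determinant.det A \<noteq> 0" using det_0_iff_vec_prod_zero[OF Ac] A_inj by auto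
  from det_non_zero_imp_unit[OF Ac this, unfolded Units_def, of "()"]
  obtain B where B: "B \<in> carrier_mat n n" and BA: "B * A = 1\<^sub>m n" and AB: "A * B = 1\<^sub>m n"
    by (auto simp: ring_mat_def)
  have "mat_inv A = B" unfolding mat_inv_def
  proof (rule the_equality)
    show "B \<in> carrier_mat (dim_row A) (dim_row A) \<and> A * B = 1\<^sub>m (dim_row A) \<and> B * A = 1\<^sub>m (dim_row A)"
      using B AB BA Ac by auto
  next
    fix B' assume "B' \<in> carrier_mat (dim_row A) (dim_row A) \<and> A * B' = 1\<^sub>m (dim_row A) \<and> B' * A = 1\<^sub>m (dim_row A)"
    hence B': "B' \<in> carrier_mat n n" "A * B' = 1\<^sub>m n" "B' * A = 1\<^sub>m n" using Ac by auto
    have "B' = B' * 1\<^sub>m n" using B' by simp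
    also have "\<dots> = B' * (A * B)" using AB by simp
    also have "\<dots> = (B' * A) * B" using assoc_mult_mat[OF B'(1) Ac B] by simp
    also have "\<dots> = 1\<^sub>m n * B" using B'(3) by simp
    also have "\<dots> = B" using B by simp
    finally show "B' = B" .
  qed
  thus ?thesis using that B AB BA by blast
qed

definition good where "good y \<longleftrightarrow> y \<in> carrier_vec n \<and> (\<forall>i<n. y$i - (Q *\<^sub>v y)$i = 2 * q$i - 1) \<and> Wf y = 0"

lemma good_iff: assumes y: "y \<in> carrier_vec n"
  shows "good y \<longleftrightarrow> A *\<^sub>v (y + ones_vec n) = q"
proof -
  have y1: "y + ones_vec n \<in> carrier_vec n" using y by simp
  have Wy1: "Wf (y + ones_vec n) = Wf y + 1/2" using Wf_add[OF y] Wf_ones by simp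
  have idx: "(A *\<^sub>v (y + ones_vec n)) $ i = y$i - (Q *\<^sub>v y)$i + 2 * (1 - q$i) * (Wf y + 1/2)" if "i<n" for i
    using A_mv[OF y1 that] Wy1 mv_add[OF y _ that] mv_ones[OF that] y that by simp
  show ?thesis
  proof
    assume g: "good y"
    show "A *\<^sub>v (y + ones_vec n) = q"
    proof
      fix i assume "i < dim_vec q" hence i: "i<n" using qc by auto
      show "(A *\<^sub>v (y + ones_vec n)) $ i = q $ i" using idx[OF i] g i unfolding good_def
        by (simp add: algebra_simps)
    qed (use qc Ac in auto)
  next
    assume e: "A *\<^sub>v (y + ones_vec n) = q"
    have e2: "y$i - (Q *\<^sub>v y)$i + 2 * (1 - q$i) * (Wf y + 1/2) = q$i" if "i<n" for i
    proof -
      have "(A *\<^sub>v (y + ones_vec n)) $ i = q$i" using e by simp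
      thus ?thesis using idx[OF that] by simp
    qed
    have "(\<Sum>i<n. m$i * y$i - m$i * (Q *\<^sub>v y)$i + (2 * (Wf y + 1/2)) * (m$i * (1 - q$i))) = (\<Sum>i<n. m$i * q$i)"
    proof (rule sum.cong)
      fix i assume "i \<in> {..<n}" hence i: "i<n" by simp
      have "m$i * y$i - m$i * (Q *\<^sub>v y)$i + (2 * (Wf y + 1/2)) * (m$i * (1 - q$i))
          = m$i * (y$i - (Q *\<^sub>v y)$i + 2 * (1 - q$i) * (Wf y + 1/2))" by (simp add: algebra_simps)
      also have "\<dots> = m$i * q$i" using e2[OF i] by simp
      finally show "m$i * y$i - m$i * (Q *\<^sub>v y)$i + (2 * (Wf y + 1/2)) * (m$i * (1 - q$i)) = m$i * q$i" .
    qed simp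
    hence "(\<Sum>i<n. m$i * y$i) - (\<Sum>i<n. m$i * (Q *\<^sub>v y)$i) + 2 * (Wf y + 1/2) * (\<Sum>i<n. m$i * (1 - q$i)) = 1/2"
      using mq_sum by (simp only: sum_lin3)
    hence W0: "Wf y = 0" using mQ[OF y] m1q by simp
    show "good y" unfolding good_def using y e2 W0 by (simp add: algebra_simps)
  qed
qed

lemma r_vec_eq: "r_vec q Q = mat_inv A *\<^sub>v q - ones_vec n"
  by (simp only: r_vec_def Let_def sd dimQ A_def q1_def w_def)

lemma r_vec_good: "good (r_vec q Q)"
proof -
  obtain B where B: "B \<in> carrier_mat n n" "A * B = 1\<^sub>m n" "B * A = 1\<^sub>m n" "mat_inv A = B"
    using A_inverse by blast
  have rc: "r_vec q Q \<in> carrier_vec n" using B qc by (simp add: r_vec_eq)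
  have "r_vec q Q + ones_vec n = B *\<^sub>v q" using B qc
    by (intro eq_vecI) (auto simp: r_vec_eq)
  hence "A *\<^sub>v (r_vec q Q + ones_vec n) = (A * B) *\<^sub>v q" using assoc_mult_mat_vec[OF Ac B(1) qc] by simp
  also have "\<dots> = q" using B qc by simp
  finally show ?thesis using good_iff[OF rc] by simp
qed

lemma r_vec_unique: assumes g: "good y" shows "r_vec q Q = y"
proof -
  obtain B where B: "B \<in> carrier_mat n n" "A * B = 1\<^sub>m n" "B * A = 1\<^sub>m n" "mat_inv A = B"
    using A_inverse by blast
  have y: "y \<in> carrier_vec n" using g good_def by blast
  have e: "A *\<^sub>v (y + ones_vec n) = q" using good_iff[OF y] g by simp
  have y1: "y + ones_vec n \<in> carrier_vec n" using y by simp
  have "B *\<^sub>v q = (B * A) *\<^sub>v (y + ones_vec n)" using assoc_mult_mat_vec[OF B(1) Ac y1] e by simp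
  also have "\<dots> = y + ones_vec n" using B y by simp
  finally have "B *\<^sub>v q = y + ones_vec n" .
  thus ?thesis using B y by (intro eq_vecI) (auto simp: r_vec_eq)
qed

lemma nu_eq: "nu q Q = 2 + 4 * (\<Sum>k<n. m$k * q$k * (Q *\<^sub>v r_vec q Q)$k)"
proof -
  have rc: "r_vec q Q \<in> carrier_vec n" using r_vec_good good_def by blast
  have "row_mult m (diag_vec q * Q) \<bullet> r_vec q Q = (\<Sum>k<n. m$k * q$k * (Q *\<^sub>v r_vec q Q)$k)"
    by (rule rowdiag[OF qc mc rc])
  thus ?thesis by (simp only: nu_def sd)
qed

end


lemma sum_split2: "(\<Sum>j<N+M. f j) = (\<Sum>j<N. f j) + (\<Sum>j<M. f (N+j::nat))"
  by (induction M) (simp_all add: add.assoc)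

locale main =
  fixes N :: nat and K :: "real mat" and \<mu> \<eta> p0 p1 :: "real vec"
  assumes K_carrier: "K \<in> carrier_mat N N"
    and K_stoch: "stochastic_mat K"
    and K_class: "\<exists>!C. closed_irreducible K C"
    and mu_stat: "stationary K \<mu>"
    and mu_unique: "\<And>m. stationary K m \<Longrightarrow> m = \<mu>"
    and p0_dim: "p0 \<in> carrier_vec N" and p1_dim: "p1 \<in> carrier_vec N"
    and p0_range: "\<And>i. i < N \<Longrightarrow> 0 < p0 $ i \<and> p0 $ i < 1"
    and p1_range: "\<And>i. i < N \<Longrightarrow> 0 < p1 $ i \<and> p1 $ i < 1"
    and p_mono: "\<And>i. i < N \<Longrightarrow> p1 $ i \<ge> p0 $ i"
    and mu_p0: "\<mu> \<bullet> p0 = 1/2"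
    and mu_p1: "\<mu> \<bullet> p1 > \<mu> \<bullet> p0"
    and eta_distr: "is_distribution N \<eta>"
begin

lemma Kdim[simp]: "dim_row K = N" "dim_col K = N" using K_carrier by auto

lemma stK: "stoch N K"
  using K_carrier K_stoch unfolding stochastic_mat_def stoch_def by auto

lemma harmK: "\<forall>x\<in>carrier_vec N. K *\<^sub>v x = x \<longrightarrow> (\<exists>c. \<forall>i<N. x$i = c)"
  using stoch.harmonic_const[OF stK K_class] .

lemma sdK: "stat_dist K = \<mu>"
  unfolding stat_dist_def by (rule the_equality[where P="stationary K", OF mu_stat mu_unique])

lemma mu_dist: "is_distribution N \<mu>" and mu_rm: "row_mult \<mu> K = \<mu>"
  using mu_stat unfolding stationary_def by auto

lemma N_pos: "N > 0"
  using eta_distr unfolding is_distribution_def by (cases N) auto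

lemma KK_loc: "stoch_r N K \<mu> p0"
  unfolding stoch_r_def stoch_r_axioms_def using stK mu_dist mu_rm sdK harmK p0_dim mu_p0 by auto

end

sublocale main \<subseteq> KK: stoch_r N K \<mu> p0 by (rule KK_loc)

context main
begin

definition v where "v = p1 - p0"

lemma vc: "v \<in> carrier_vec N" unfolding v_def using p1_dim p0_dim by simp

lemma v_idx: "i<N \<Longrightarrow> v$i = p1$i - p0$i" unfolding v_def using p1_dim p0_dim by simp

lemma v_bnd: "i<N \<Longrightarrow> 0 \<le> v$i \<and> v$i \<le> 1"
  using v_idx p_mono p1_range p0_range by fastforce

lemma pow_bounds: "\<forall>y. y \<in> carrier_vec N \<longrightarrow> (\<forall>i<N. 0 \<le> y$i \<and> y$i \<le> 1) \<longrightarrow>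
   (\<forall>i<N. 0 \<le> (K ^\<^sub>m j *\<^sub>v y)$i \<and> (K ^\<^sub>m j *\<^sub>v y)$i \<le> 1)"
proof (induction j)
  case 0
  then show ?case by simp
next
  case (Suc j)
  show ?case
  proof (intro allI impI)
    fix y :: "real vec" and i assume y: "y \<in> carrier_vec N" and b: "\<forall>i<N. 0 \<le> y$i \<and> y$i \<le> 1" and i: "i<N"
    have Ky: "K *\<^sub>v y \<in> carrier_vec N" using y K_carrier by simp
    have bK: "\<forall>i<N. 0 \<le> (K *\<^sub>v y)$i \<and> (K *\<^sub>v y)$i \<le> 1"
      using KK.mv_le[OF y] KK.mv_ge[OF y] b by blast
    have "K ^\<^sub>m Suc j *\<^sub>v y = K ^\<^sub>m j *\<^sub>v (K *\<^sub>v y)"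
      using assoc_mult_mat_vec[OF pow_carrier_mat[OF K_carrier] K_carrier y] by simp
    thus "0 \<le> (K ^\<^sub>m Suc j *\<^sub>v y)$i \<and> (K ^\<^sub>m Suc j *\<^sub>v y)$i \<le> 1"
      using Suc.IH Ky bK i by simp
  qed
qed

lemma pow_comm: "K ^\<^sub>m j * K = K * K ^\<^sub>m j"
proof (induction j)
  case 0 thus ?case using K_carrier by simp
next
  case (Suc j)
  have "K ^\<^sub>m Suc j * K = (K ^\<^sub>m j * K) * K" by simp
  also have "\<dots> = (K * K ^\<^sub>m j) * K" using Suc.IH by simp
  also have "\<dots> = K * (K ^\<^sub>m j * K)" using assoc_mult_mat[OF K_carrier pow_carrier_mat[OF K_carrier] K_carrier] .
  also have "\<dots> = K * K ^\<^sub>m Suc j" by simp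
  finally show ?case .
qed

definition xs where "xs j = K ^\<^sub>m j *\<^sub>v v"

lemma xs_c: "xs j \<in> carrier_vec N" unfolding xs_def by (rule mult_mat_vec_carrier[OF pow_carrier_mat[OF K_carrier] vc])

lemma xs_bnd: "i<N \<Longrightarrow> 0 \<le> xs j $ i \<and> xs j $ i \<le> 1"
  unfolding xs_def using pow_bounds vc v_bnd by blast

lemma xs_Suc: "xs (Suc j) = K *\<^sub>v xs j"
proof -
  have "xs (Suc j) = (K * K ^\<^sub>m j) *\<^sub>v v" unfolding xs_def by (simp add: pow_comm)
  also have "\<dots> = K *\<^sub>v xs j" unfolding xs_def
    using assoc_mult_mat_vec[OF K_carrier pow_carrier_mat[OF K_carrier] vc] .
  finally show ?thesis .
qed

lemma summ: assumes c: "0 \<le> c" "c < 1" and i: "i<N"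
  shows "summable (\<lambda>j. c^j * xs (f j) $ i)"
proof (rule summable_comparison_test[of _ "\<lambda>j. c^j"])
  show "\<exists>N0. \<forall>j\<ge>N0. norm (c^j * xs (f j) $ i) \<le> c^j"
    using xs_bnd[OF i] c by (intro exI[of _ 0] allI impI) (simp add: abs_mult mult_left_le)
  show "summable (\<lambda>j. c^j)" using c by simp
qed

definition T where "T c = vec N (\<lambda>i. \<Sum>j. c^j * xs j $ i)"

lemma Tc: "T c \<in> carrier_vec N" unfolding T_def by simp

lemma KT: assumes c: "0 \<le> c" "c < 1" and i: "i<N"
  shows "(K *\<^sub>v T c)$i = (\<Sum>j. c^j * xs (Suc j) $ i)"
proof -
  have "(K *\<^sub>v T c)$i = (\<Sum>k<N. K$$(i,k) * (\<Sum>j. c^j * xs j $ k))"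
    using KK.mv[OF Tc i] unfolding T_def by simp
  also have "\<dots> = (\<Sum>k<N. \<Sum>j. K$$(i,k) * (c^j * xs j $ k))"
    by (rule sum.cong[OF refl], rule suminf_mult[symmetric], rule summ[OF c, of _ id, simplified]) simp
  also have "\<dots> = (\<Sum>j. \<Sum>k<N. K$$(i,k) * (c^j * xs j $ k))"
    by (rule suminf_sum[symmetric], rule summable_mult, rule summ[OF c, of _ id, simplified]) simp
  also have "\<dots> = (\<Sum>j. c^j * xs (Suc j) $ i)"
  proof (rule suminf_cong)
    fix j
    have "(\<Sum>k<N. K$$(i,k) * (c^j * xs j $ k)) = c^j * (\<Sum>k<N. K$$(i,k) * xs j $ k)"
      by (simp add: sum_distrib_left mult_ac)
    also have "\<dots> = c^j * xs (Suc j) $ i" using KK.mv[OF xs_c i] xs_Suc by simp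
    finally show "(\<Sum>k<N. K$$(i,k) * (c^j * xs j $ k)) = c^j * xs (Suc j) $ i" .
  qed
  finally show ?thesis .
qed

lemma T_eq: assumes c: "0 \<le> c" "c < 1" and i: "i<N"
  shows "T c $ i - c * (K *\<^sub>v T c)$i = v$i"
proof -
  have s: "summable (\<lambda>j. c^j * xs j $ i)" using summ[OF c i, of id] by simp
  have s2: "summable (\<lambda>j. c^j * xs (Suc j) $ i)" using summ[OF c i, of Suc] by simp
  have "(\<Sum>j. c^(Suc j) * xs (Suc j) $ i) = (\<Sum>j. c^j * xs j $ i) - c^0 * xs 0 $ i"
    using suminf_split_head[OF s] by simp
  moreover have "(\<Sum>j. c^(Suc j) * xs (Suc j) $ i) = c * (\<Sum>j. c^j * xs (Suc j) $ i)"
    using suminf_mult[OF s2, of c] by (simp add: mult_ac)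
  moreover have "xs 0 $ i = v$i" unfolding xs_def using vc i by simp
  ultimately show ?thesis using KT[OF c i] i unfolding T_def by simp
qed

end


lemma all_split2: "(\<forall>i<N+N. P i) \<longleftrightarrow> (\<forall>i<N. P i) \<and> (\<forall>i<N. P (N+i::nat))"
proof
  assume "(\<forall>i<N. P i) \<and> (\<forall>i<N. P (N+i))"
  thus "\<forall>i<N+N. P i"
  proof (intro allI impI)
    fix i assume h: "(\<forall>i<N. P i) \<and> (\<forall>i<N. P (N+i))" and i: "i < N+N"
    show "P i"
    proof (cases "i<N")
      case True thus ?thesis using h by blast
    next
      case False
      hence "i = N + (i-N)" "i - N < N" using i by auto
      thus ?thesis using h by metis
    qed
  qed
qed auto

locale main_e = main +
  fixes e :: real
  assumes e0: "0 < e" and e1: "e \<le> 1"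
begin

abbreviation Kh where "Kh \<equiv> hatK K e"

lemma Kh_c: "Kh \<in> carrier_mat (N+N) (N+N)"
  unfolding hatK_def using K_carrier by (intro four_block_carrier_mat) auto

lemma Kh_dim[simp]: "dim_row Kh = N+N" "dim_col Kh = N+N" using Kh_c by auto

lemma Kh_idx: "i < N+N \<Longrightarrow> j < N+N \<Longrightarrow> Kh $$ (i,j) =
  (if i<N then if j<N then (1-e)*K$$(i,j) else e*K$$(i,j-N) else if j<N then 0 else K$$(i-N,j-N))"
  unfolding hatK_def using K_carrier by (simp add: index_mat_four_block)

lemma Kh_idx1: "i<N \<Longrightarrow> j<N \<Longrightarrow> Kh $$ (i,j) = (1-e)*K$$(i,j)" using Kh_idx by simp
lemma Kh_idx2: "i<N \<Longrightarrow> j<N \<Longrightarrow> Kh $$ (i,N+j) = e*K$$(i,j)" using Kh_idx[of i "N+j"] by simp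
lemma Kh_idx3: "i<N \<Longrightarrow> j<N \<Longrightarrow> Kh $$ (N+i,j) = 0" using Kh_idx[of "N+i" j] by simp
lemma Kh_idx4: "i<N \<Longrightarrow> j<N \<Longrightarrow> Kh $$ (N+i,N+j) = K$$(i,j)" using Kh_idx[of "N+i" "N+j"] by simp

lemma Kh_mv1: assumes z: "z \<in> carrier_vec (N+N)" and i: "i<N"
  shows "(Kh *\<^sub>v z)$i = (1-e)*(\<Sum>j<N. K$$(i,j)*z$j) + e*(\<Sum>j<N. K$$(i,j)*z$(N+j))"
proof -
  have "(Kh *\<^sub>v z)$i = (\<Sum>j<N+N. Kh$$(i,j)*z$j)" using mv_index[OF Kh_c z] i by simp
  also have "\<dots> = (\<Sum>j<N. Kh$$(i,j)*z$j) + (\<Sum>j<N. Kh$$(i,N+j)*z$(N+j))" by (rule sum_split2)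
  also have "(\<Sum>j<N. Kh$$(i,j)*z$j) = (1-e)*(\<Sum>j<N. K$$(i,j)*z$j)"
    by (simp add: sum_distrib_left Kh_idx1 i mult.assoc)
  also have "(\<Sum>j<N. Kh$$(i,N+j)*z$(N+j)) = e*(\<Sum>j<N. K$$(i,j)*z$(N+j))"
    by (simp add: sum_distrib_left Kh_idx2 i mult.assoc)
  finally show ?thesis .
qed

lemma Kh_mv2: assumes z: "z \<in> carrier_vec (N+N)" and i: "i<N"
  shows "(Kh *\<^sub>v z)$(N+i) = (\<Sum>j<N. K$$(i,j)*z$(N+j))"
proof -
  have "(Kh *\<^sub>v z)$(N+i) = (\<Sum>j<N+N. Kh$$(N+i,j)*z$j)" using mv_index[OF Kh_c z] i by simp
  also have "\<dots> = (\<Sum>j<N. Kh$$(N+i,j)*z$j) + (\<Sum>j<N. Kh$$(N+i,N+j)*z$(N+j))" by (rule sum_split2)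
  also have "(\<Sum>j<N. Kh$$(N+i,j)*z$j) = 0" by (simp add: Kh_idx3 i)
  also have "(\<Sum>j<N. Kh$$(N+i,N+j)*z$(N+j)) = (\<Sum>j<N. K$$(i,j)*z$(N+j))"
    by (simp add: Kh_idx4 i)
  finally show ?thesis by simp
qed

lemma Kh_nn: "i < N+N \<Longrightarrow> j < N+N \<Longrightarrow> Kh $$ (i,j) \<ge> 0"
  using Kh_idx[of i j] KK.Qnn e0 e1 by auto

lemma Kh_row: assumes i: "i < N+N" shows "(\<Sum>j<N+N. Kh$$(i,j)) = 1"
proof -
  have "(\<Sum>j<N+N. Kh$$(i,j)) = (\<Sum>j<N. Kh$$(i,j)) + (\<Sum>j<N. Kh$$(i,N+j))" by (rule sum_split2)
  also have "\<dots> = 1"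
  proof (cases "i<N")
    case True
    have "(\<Sum>j<N. Kh$$(i,j)) = (1-e)*(\<Sum>j<N. K$$(i,j))" by (simp add: sum_distrib_left Kh_idx1 True)
    moreover have "(\<Sum>j<N. Kh$$(i,N+j)) = e*(\<Sum>j<N. K$$(i,j))" by (simp add: sum_distrib_left Kh_idx2 True)
    ultimately show ?thesis using KK.Qrow[OF True] by simp
  next
    case False
    define i' where "i' = i - N"
    have ii: "i = N + i'" "i' < N" using False i unfolding i'_def by auto
    have "(\<Sum>j<N. Kh$$(i,j)) = 0" by (simp add: ii Kh_idx3)
    moreover have "(\<Sum>j<N. Kh$$(i,N+j)) = (\<Sum>j<N. K$$(i',j))" by (simp add: ii Kh_idx4)
    ultimately show ?thesis using KK.Qrow[OF ii(2)] by simp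
  qed
  finally show ?thesis .
qed

lemma stKh: "stoch (N+N) Kh"
  unfolding stoch_def using Kh_c Kh_nn Kh_row by auto

lemma harmKh: "\<forall>z\<in>carrier_vec (N+N). Kh *\<^sub>v z = z \<longrightarrow> (\<exists>c. \<forall>i<N+N. z$i = c)"
proof (intro ballI impI)
  fix z :: "real vec" assume z: "z \<in> carrier_vec (N+N)" and h: "Kh *\<^sub>v z = z"
  define b where "b = vec N (\<lambda>i. z$(N+i))"
  have bc: "b \<in> carrier_vec N" unfolding b_def by simp
  have "K *\<^sub>v b = b"
  proof
    fix i assume "i < dim_vec b" hence i: "i<N" unfolding b_def by simp
    have "(K *\<^sub>v b)$i = (\<Sum>j<N. K$$(i,j)*z$(N+j))" using KK.mv[OF bc i] unfolding b_def by simp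
    also have "\<dots> = (Kh *\<^sub>v z)$(N+i)" using Kh_mv2[OF z i] by simp
    also have "\<dots> = b$i" using h i unfolding b_def by simp
    finally show "(K *\<^sub>v b)$i = b$i" .
  qed (use bc in auto)
  then obtain c where c: "\<forall>i<N. b$i = c" using harmK bc by blast
  have zc2: "z$(N+i) = c" if "i<N" for i using c that unfolding b_def by simp
  define u where "u = vec N (\<lambda>i. z$i - c)"
  have uc: "u \<in> carrier_vec N" unfolding u_def by simp
  have ueq: "u$i = (1-e) * (K *\<^sub>v u)$i" if i: "i<N" for i
  proof -
    have "z$i = (Kh *\<^sub>v z)$i" using h by simp
    also have "\<dots> = (1-e)*(\<Sum>j<N. K$$(i,j)*z$j) + e*(\<Sum>j<N. K$$(i,j)*z$(N+j))" by (rule Kh_mv1[OF z i])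
    also have "(\<Sum>j<N. K$$(i,j)*z$(N+j)) = (\<Sum>j<N. K$$(i,j)*c)" by (rule sum.cong) (simp_all add: zc2)
    also have "\<dots> = c" using KK.Qrow[OF i] by (simp add: sum_distrib_right[symmetric])
    finally have zi: "z$i = (1-e)*(\<Sum>j<N. K$$(i,j)*z$j) + e*c" .
    have "(K *\<^sub>v u)$i = (\<Sum>j<N. K$$(i,j)*(z$j - c))" using KK.mv[OF uc i] unfolding u_def by simp
    also have "\<dots> = (\<Sum>j<N. K$$(i,j)*z$j) - (\<Sum>j<N. K$$(i,j))*c"
      by (simp add: right_diff_distrib sum_subtractf sum_distrib_right)
    also have "\<dots> = (\<Sum>j<N. K$$(i,j)*z$j) - c" using KK.Qrow[OF i] by simp
    finally have X: "(K *\<^sub>v u)$i = (\<Sum>j<N. K$$(i,j)*z$j) - c" .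
    have ui: "u$i = z$i - c" unfolding u_def using i by simp
    show ?thesis unfolding X ui by (simp add: zi algebra_simps)
  qed
  define B where "B = Max ((\<lambda>i. \<bar>u$i\<bar>) ` {..<N})"
  have uB: "\<bar>u$j\<bar> \<le> B" if "j<N" for j unfolding B_def using that by auto
  have "B \<in> (\<lambda>i. \<bar>u$i\<bar>) ` {..<N}" unfolding B_def using N_pos by (intro Max_in) auto
  then obtain i0 where i0: "i0<N" "\<bar>u$i0\<bar> = B" by auto
  have "\<bar>(K *\<^sub>v u)$i0\<bar> \<le> B" using KK.mv_abs[OF uc uB i0(1)] by blast
  hence KB: "\<bar>(K *\<^sub>v u)$i0\<bar> \<le> B" .
  have "B = (1-e) * \<bar>(K *\<^sub>v u)$i0\<bar>" using ueq[OF i0(1)] i0(2) e1 by (simp add: abs_mult)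
  also have "\<dots> \<le> (1-e) * B" by (rule mult_left_mono[OF KB]) (use e1 in simp)
  finally have "B \<le> (1-e) * B" .
  hence "B * e \<le> 0" by (simp add: algebra_simps)
  hence "B \<le> 0" using e0 by (simp add: mult_le_0_iff)
  hence u0: "u$i = 0" if "i<N" for i using uB[OF that] by simp
  have "\<forall>i<N+N. z$i = c"
    unfolding all_split2 using u0 zc2 unfolding u_def by auto
  thus "\<exists>c. \<forall>i<N+N. z$i = c" by blast
qed

definition mh where "mh = 0\<^sub>v N @\<^sub>v \<mu>"
definition qh where "qh = p1 @\<^sub>v p0"

lemma muc: "\<mu> \<in> carrier_vec N" using KK.mc .

lemma mh_c: "mh \<in> carrier_vec (N+N)" unfolding mh_def using muc by simp
lemma mh_1: "i<N \<Longrightarrow> mh$i = 0" unfolding mh_def using muc by simp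
lemma mh_2: "i<N \<Longrightarrow> mh$(N+i) = \<mu>$i" unfolding mh_def using muc by simp
lemma qh_c: "qh \<in> carrier_vec (N+N)" unfolding qh_def using p0_dim p1_dim by simp
lemma qh_1: "i<N \<Longrightarrow> qh$i = p1$i" unfolding qh_def using p1_dim p0_dim by simp
lemma qh_2: "i<N \<Longrightarrow> qh$(N+i) = p0$i" unfolding qh_def using p1_dim p0_dim by simp

lemma mh_stat: "stationary Kh mh"
proof -
  have dist: "is_distribution (N+N) mh"
    unfolding is_distribution_def
  proof (intro conjI allI impI)
    show "dim_vec mh = N+N" using mh_c by simp
    fix i assume "i < N+N" thus "0 \<le> mh$i"
      using mh_1 mh_2 KK.m_nn by (cases "i<N") (auto, metis add_diff_inverse_nat add_less_cancel_left)
  next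
    show "(\<Sum>i<N+N. mh$i) = 1" unfolding sum_split2 using mh_1 mh_2 KK.m_sum by simp
  qed
  have "row_mult mh Kh = mh"
  proof
    show "dim_vec (row_mult mh Kh) = dim_vec mh" using mh_c by simp
    fix j assume "j < dim_vec mh" hence j: "j < N+N" using mh_c by simp
    have "row_mult mh Kh $ j = (\<Sum>k<N+N. Kh$$(k,j) * mh$k)" by (rule row_mult_index[OF Kh_c mh_c j])
    also have "\<dots> = (\<Sum>k<N. Kh$$(N+k,j) * \<mu>$k)" unfolding sum_split2 by (simp add: mh_1 mh_2)
    also have "\<dots> = mh$j"
    proof (cases "j<N")
      case True thus ?thesis by (simp add: Kh_idx3 mh_1)
    next
      case False
      define j' where "j' = j - N"
      have jj: "j = N + j'" "j' < N" using False j unfolding j'_def by auto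
      have "(\<Sum>k<N. Kh$$(N+k,j) * \<mu>$k) = (\<Sum>k<N. K$$(k,j') * \<mu>$k)" by (simp add: jj Kh_idx4)
      also have "\<dots> = \<mu>$j'" by (rule KK.m_stat_idx[OF jj(2)])
      finally show ?thesis by (simp add: jj mh_2)
    qed
    finally show "row_mult mh Kh $ j = mh $ j" .
  qed
  thus ?thesis unfolding stationary_def using dist by simp
qed

lemma mh_unique: assumes st: "stationary Kh m'" shows "m' = mh"
proof -
  have d: "is_distribution (N+N) m'" and rm: "row_mult m' Kh = m'" using st unfolding stationary_def by auto
  have m'c: "m' \<in> carrier_vec (N+N)" using d unfolding is_distribution_def carrier_vec_def by auto
  have nn: "\<And>i. i<N+N \<Longrightarrow> m'$i \<ge> 0" using d unfolding is_distribution_def by auto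
  have s1: "(\<Sum>i<N+N. m'$i) = 1" using d unfolding is_distribution_def by auto
  have rj: "m'$j = (\<Sum>k<N. Kh$$(k,j) * m'$k) + (\<Sum>k<N. Kh$$(N+k,j) * m'$(N+k))" if "j<N+N" for j
  proof -
    have "m'$j = row_mult m' Kh $ j" using rm by simp
    also have "\<dots> = (\<Sum>k<N+N. Kh$$(k,j) * m'$k)" by (rule row_mult_index[OF Kh_c m'c that])
    finally show ?thesis unfolding sum_split2 .
  qed
  have r1: "m'$j = (1-e) * (\<Sum>k<N. K$$(k,j) * m'$k)" if j: "j<N" for j
    using rj[of j] j by (simp add: Kh_idx1 Kh_idx3 sum_distrib_left mult.assoc)
  have "(\<Sum>j<N. m'$j) = (1-e) * (\<Sum>j<N. \<Sum>k<N. K$$(k,j) * m'$k)"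
    by (simp add: r1 sum_distrib_left)
  also have "(\<Sum>j<N. \<Sum>k<N. K$$(k,j) * m'$k) = (\<Sum>k<N. \<Sum>j<N. K$$(k,j) * m'$k)" by (rule sum.swap)
  also have "\<dots> = (\<Sum>k<N. m'$k)"
    by (rule sum.cong) (simp_all add: sum_distrib_right[symmetric] KK.Qrow)
  finally have "e * (\<Sum>j<N. m'$j) = 0" by (simp add: algebra_simps)
  hence s0: "(\<Sum>j<N. m'$j) = 0" using e0 by simp
  have z1: "m'$j = 0" if "j<N" for j
    using sum_nonneg_eq_0_iff[of "{..<N}" "\<lambda>j. m'$j"] s0 nn that by auto
  define b where "b = vec N (\<lambda>j. m'$(N+j))"
  have bc: "b \<in> carrier_vec N" unfolding b_def by simp
  have "stationary K b"
    unfolding stationary_def is_distribution_def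
  proof (intro conjI allI impI)
    show "dim_vec b = dim_row K" unfolding b_def by simp
    show "\<And>i. i < dim_row K \<Longrightarrow> 0 \<le> b$i" unfolding b_def using nn by simp
    show "(\<Sum>i<dim_row K. b$i) = 1" using s1 s0 unfolding sum_split2 b_def by simp
    show "row_mult b K = b"
    proof
      show "dim_vec (row_mult b K) = dim_vec b" using bc by simp
      fix j assume "j < dim_vec b" hence j: "j<N" using bc by simp
      have "row_mult b K $ j = (\<Sum>k<N. K$$(k,j) * b$k)" by (rule row_mult_index[OF K_carrier bc j])
      also have "\<dots> = (\<Sum>k<N. Kh$$(k,N+j) * m'$k) + (\<Sum>k<N. Kh$$(N+k,N+j) * m'$(N+k))"
        by (simp add: z1 Kh_idx4 j b_def)
      also have "\<dots> = m'$(N+j)" using rj[of "N+j"] j by simp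
      finally show "row_mult b K $ j = b$j" using j unfolding b_def by simp
    qed
  qed
  hence bmu: "b = \<mu>" by (rule mu_unique)
  show ?thesis
  proof
    show "dim_vec m' = dim_vec mh" using m'c mh_c by simp
    fix i assume "i < dim_vec mh" hence i: "i < N+N" using mh_c by simp
    show "m'$i = mh$i"
    proof (cases "i<N")
      case True thus ?thesis using z1 mh_1 by simp
    next
      case False
      define i' where "i' = i - N"
      have ii: "i = N + i'" "i' < N" using False i unfolding i'_def by auto
      have "m'$i = b$i'" unfolding b_def using ii by simp
      thus ?thesis using bmu ii mh_2 by simp
    qed
  qed
qed

lemma sdKh: "stat_dist Kh = mh"
  unfolding stat_dist_def by (rule the_equality[where P="stationary Kh", OF mh_stat mh_unique])

lemma mhqh: "mh \<bullet> qh = 1/2"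
proof -
  have "mh \<bullet> qh = (\<Sum>k<N+N. mh$k * qh$k)" by (rule sprod_index[OF qh_c])
  also have "\<dots> = (\<Sum>k<N. \<mu>$k * p0$k)" unfolding sum_split2 by (simp add: mh_1 mh_2 qh_2)
  also have "\<dots> = 1/2" using KK.mq_sum .
  finally show ?thesis .
qed

lemma H_loc: "stoch_r (N+N) Kh mh qh"
  unfolding stoch_r_def stoch_r_axioms_def using stKh mh_stat sdKh harmKh qh_c mhqh
  unfolding stationary_def by auto

end

sublocale main_e \<subseteq> H: stoch_r "N+N" "hatK K e" mh qh by (rule H_loc)



context stoch_r
begin

lemma nu_pos: assumes q01: "\<And>i. i<n \<Longrightarrow> 0 < q$i \<and> q$i < 1" shows "nu q Q > 0"
proof -
  define r where "r = r_vec q Q"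
  have g: "good r" using r_vec_good unfolding r_def .
  hence rc: "r \<in> carrier_vec n" and req: "\<And>i. i<n \<Longrightarrow> r$i - (Q *\<^sub>v r)$i = 2*q$i - 1"
    and W0: "Wf r = 0" unfolding good_def by auto
  define a where "a i = (Q *\<^sub>v r)$i" for i
  define f where "f i = 2*q$i - 1" for i
  have af: "a i = r$i - f i" if "i<n" for i using req[OF that] unfolding a_def f_def by simp
  have P4: "4 * (\<Sum>k<n. m$k*q$k*a k) = (\<Sum>k<n. 4*m$k*f k*a k)"
  proof -
    have "(\<Sum>k<n. 4*m$k*f k*a k) = (\<Sum>k<n. 4*(m$k*q$k*a k) - 4*(m$k*(1-q$k)*a k))"
      by (rule sum.cong) (simp_all add: f_def algebra_simps)
    also have "\<dots> = 4*(\<Sum>k<n. m$k*q$k*a k) - 4*(\<Sum>k<n. m$k*(1-q$k)*a k)"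
      by (simp add: sum_subtractf sum_distrib_left)
    also have "(\<Sum>k<n. m$k*(1-q$k)*a k) = 0" using W0 unfolding Wf_def a_def .
    finally show ?thesis by simp
  qed
  have nu: "nu q Q = 2 + 4 * (\<Sum>k<n. m$k*q$k*a k)" using nu_eq unfolding a_def r_def .
  have inner: "(\<Sum>j<n. Q$$(i,j)*(r$j - a i)^2) = (\<Sum>j<n. Q$$(i,j)*(r$j)^2) - (a i)^2" if i: "i<n" for i
  proof -
    have "(\<Sum>j<n. Q$$(i,j)*(r$j - a i)^2) = (\<Sum>j<n. Q$$(i,j)*(r$j)^2 - (2*a i)*(Q$$(i,j)*r$j) + (a i)^2 * Q$$(i,j))"
      by (rule sum.cong) (simp_all add: power2_diff algebra_simps)
    also have "\<dots> = (\<Sum>j<n. Q$$(i,j)*(r$j)^2) - (\<Sum>j<n. (2*a i)*(Q$$(i,j)*r$j)) + (a i)^2 * (\<Sum>j<n. Q$$(i,j))"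
      by (rule sum_lin3)
    also have "(\<Sum>j<n. (2*a i)*(Q$$(i,j)*r$j)) = (2*a i) * a i"
      unfolding sum_distrib_left[symmetric] using mv[OF rc i] unfolding a_def by simp
    also have "(\<Sum>j<n. Q$$(i,j)) = 1" using Qrow[OF i] .
    finally show ?thesis by (simp add: power2_eq_square)
  qed
  define V where "V = (\<Sum>i<n. m$i * (\<Sum>j<n. Q$$(i,j)*(r$j - a i)^2))"
  have V0: "V \<ge> 0" unfolding V_def
    by (intro sum_nonneg mult_nonneg_nonneg) (simp_all add: m_nn Qnn)
  have Veq: "V = (\<Sum>j<n. m$j * (r$j)^2) - (\<Sum>i<n. m$i * (a i)^2)"
  proof -
    have "V = (\<Sum>i<n. m$i * (\<Sum>j<n. Q$$(i,j)*(r$j)^2) - m$i * (a i)^2)"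
      unfolding V_def by (rule sum.cong) (simp_all add: inner right_diff_distrib)
    also have "\<dots> = (\<Sum>i<n. m$i * (\<Sum>j<n. Q$$(i,j)*(r$j)^2)) - (\<Sum>i<n. m$i * (a i)^2)"
      by (rule sum_subtractf)
    also have "(\<Sum>i<n. m$i * (\<Sum>j<n. Q$$(i,j)*(r$j)^2)) = (\<Sum>j<n. m$j * (r$j)^2)"
      by (rule mQ_fun)
    finally show ?thesis .
  qed
  have key: "nu q Q = 2 * (\<Sum>i<n. m$i * (1 - (f i)^2)) + 2 * V"
  proof -
    have "nu q Q = 2 * (\<Sum>i<n. m$i) + (\<Sum>k<n. 4*m$k*f k*a k)" using nu P4 m_sum by simp
    also have "\<dots> = (\<Sum>i<n. 2 * m$i + 4*m$i*f i*a i)" by (simp add: sum.distrib sum_distrib_left)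
    also have "\<dots> = (\<Sum>i<n. 2 * (m$i * (1 - (f i)^2)) + 2 * (m$i * (r$i)^2) - 2 * (m$i * (a i)^2))"
      by (rule sum.cong) (simp_all add: af power2_eq_square algebra_simps)
    also have "\<dots> = 2 * (\<Sum>i<n. m$i * (1 - (f i)^2)) + 2 * (\<Sum>i<n. m$i * (r$i)^2) - 2 * (\<Sum>i<n. m$i * (a i)^2)"
      by (simp add: sum.distrib sum_subtractf sum_distrib_left)
    also have "\<dots> = 2 * (\<Sum>i<n. m$i * (1 - (f i)^2)) + 2 * V" using Veq by simp
    finally show ?thesis .
  qed
  have fpos: "1 - (f i)^2 > 0" if "i<n" for i
  proof -
    have "1 - (f i)^2 = 4 * (q$i * (1 - q$i))" unfolding f_def by (simp add: power2_eq_square algebra_simps)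
    thus ?thesis using q01[OF that] by simp
  qed
  obtain i0 where i0: "i0<n" "m$i0 > 0"
  proof (rule ccontr)
    assume "\<not> thesis"
    hence "\<forall>i<n. m$i \<le> 0" using that by force
    hence "(\<Sum>i<n. m$i) \<le> 0" by (intro sum_nonpos) simp
    thus False using m_sum by simp
  qed
  have nnt: "0 \<le> m$i * (1 - (f i)^2)" if "i<n" for i
    using m_nn[OF that] fpos[OF that] by simp
  have "m$i0 * (1 - (f i0)^2) \<le> (\<Sum>i<n. m$i * (1 - (f i)^2))"
    by (rule member_le_sum) (use i0 nnt in auto)
  moreover have "m$i0 * (1 - (f i0)^2) > 0" using i0 fpos by simp
  ultimately show ?thesis using key V0 by linarith
qed

end

context main_e
begin

definition c where "c = 1 - e"
lemma c0: "0 \<le> c" and c1: "c < 1" unfolding c_def using e0 e1 by auto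

definition r0 where "r0 = r_vec p0 K"
lemma r0_good: "KK.good r0" unfolding r0_def by (rule KK.r_vec_good)
lemma r0c: "r0 \<in> carrier_vec N" using r0_good unfolding KK.good_def by auto
lemma r0eq: "i<N \<Longrightarrow> r0$i - (K *\<^sub>v r0)$i = 2*p0$i - 1" using r0_good unfolding KK.good_def by auto
lemma r0W: "KK.Wf r0 = 0" using r0_good unfolding KK.good_def by auto

lemma dimT[simp]: "dim_vec (T x) = N" unfolding T_def by simp

definition ah where "ah = r0 + 2 \<cdot>\<^sub>v T c"
definition rh where "rh = ah @\<^sub>v r0"

lemma ahc: "ah \<in> carrier_vec N" unfolding ah_def using r0c Tc by simp
lemma rhc: "rh \<in> carrier_vec (N+N)" unfolding rh_def using ahc r0c by simp
lemma rh1: "i<N \<Longrightarrow> rh$i = r0$i + 2 * T c $ i" unfolding rh_def ah_def using r0c Tc by simp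
lemma rh2: "i<N \<Longrightarrow> rh$(N+i) = r0$i" unfolding rh_def using ahc r0c by simp

lemma Kh_rh1: assumes i: "i<N"
  shows "(Kh *\<^sub>v rh)$i = (1-e)*((K *\<^sub>v r0)$i + 2*(K *\<^sub>v T c)$i) + e*(K *\<^sub>v r0)$i"
proof -
  have "(\<Sum>j<N. K$$(i,j)*rh$j) = (\<Sum>j<N. K$$(i,j)*ah$j)"
    by (rule sum.cong) (simp_all add: rh1 ah_def r0c)
  also have "\<dots> = (K *\<^sub>v ah)$i" using KK.mv[OF ahc i] by simp
  also have "\<dots> = (K *\<^sub>v r0)$i + 2*(K *\<^sub>v T c)$i"
    unfolding ah_def using KK.mv_add[OF r0c _ i, of "2 \<cdot>\<^sub>v T c"] KK.mv_smult[OF Tc i] Tc by simp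
  finally have A1: "(\<Sum>j<N. K$$(i,j)*rh$j) = (K *\<^sub>v r0)$i + 2*(K *\<^sub>v T c)$i" .
  have A2: "(\<Sum>j<N. K$$(i,j)*rh$(N+j)) = (K *\<^sub>v r0)$i"
    using KK.mv[OF r0c i] by (simp add: rh2)
  show ?thesis using Kh_mv1[OF rhc i] A1 A2 by simp
qed

lemma Kh_rh2: assumes i: "i<N" shows "(Kh *\<^sub>v rh)$(N+i) = (K *\<^sub>v r0)$i"
  using Kh_mv2[OF rhc i] KK.mv[OF r0c i] by (simp add: rh2)

lemma rh_good: "H.good rh"
  unfolding H.good_def
proof (intro conjI)
  show "rh \<in> carrier_vec (N+N)" by (rule rhc)
  show "\<forall>i<N+N. rh$i - (Kh *\<^sub>v rh)$i = 2 * qh$i - 1"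
    unfolding all_split2
  proof (intro conjI allI impI)
    fix i assume i: "i<N"
    have "rh$i - (Kh *\<^sub>v rh)$i = (r0$i - (K *\<^sub>v r0)$i) + 2*(T c $ i - c * (K *\<^sub>v T c)$i)"
      using rh1[OF i] Kh_rh1[OF i] unfolding c_def by (simp add: algebra_simps)
    also have "\<dots> = (2*p0$i - 1) + 2 * v$i" using r0eq[OF i] T_eq[OF c0 c1 i] by simp
    also have "\<dots> = 2 * qh$i - 1" using v_idx[OF i] qh_1[OF i] by simp
    finally show "rh$i - (Kh *\<^sub>v rh)$i = 2 * qh$i - 1" .
  next
    fix i assume i: "i<N"
    show "rh$(N+i) - (Kh *\<^sub>v rh)$(N+i) = 2 * qh$(N+i) - 1"
      using rh2[OF i] Kh_rh2[OF i] r0eq[OF i] qh_2[OF i] by simp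
  qed
  show "H.Wf rh = 0"
  proof -
    have "H.Wf rh = (\<Sum>k<N+N. mh$k * (1 - qh$k) * (Kh *\<^sub>v rh)$k)" unfolding H.Wf_def ..
    also have "\<dots> = (\<Sum>k<N. \<mu>$k * (1 - p0$k) * (K *\<^sub>v r0)$k)"
      unfolding sum_split2 by (simp add: mh_1 mh_2 qh_2 Kh_rh2)
    also have "\<dots> = KK.Wf r0" unfolding KK.Wf_def ..
    finally show ?thesis using r0W by simp
  qed
qed

lemma rvec_h: "r_vec qh Kh = rh" by (rule H.r_vec_unique[OF rh_good])

lemma nu_h: "nu qh Kh = nu p0 K"
proof -
  have "nu qh Kh = 2 + 4 * (\<Sum>k<N+N. mh$k * qh$k * (Kh *\<^sub>v rh)$k)" using H.nu_eq rvec_h by simp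
  also have "(\<Sum>k<N+N. mh$k * qh$k * (Kh *\<^sub>v rh)$k) = (\<Sum>k<N. \<mu>$k * p0$k * (K *\<^sub>v r0)$k)"
    unfolding sum_split2 by (simp add: mh_1 mh_2 qh_2 Kh_rh2)
  also have "2 + 4 * \<dots> = nu p0 K" using KK.nu_eq unfolding r0_def by simp
  finally show ?thesis .
qed

lemma eta_c: "\<eta> \<in> carrier_vec N" using eta_distr unfolding is_distribution_def carrier_vec_def by auto

lemma etah_dot: "hateta \<eta> e \<bullet> rh = \<eta> \<bullet> r0 + 2 * (\<Sum>k<N. \<eta>$k * (c * T c $ k))"
proof -
  have ehc: "hateta \<eta> e \<in> carrier_vec (N+N)" unfolding hateta_def using eta_c by simp
  have e1': "i<N \<Longrightarrow> hateta \<eta> e $ i = (1-e) * \<eta>$i" for i unfolding hateta_def using eta_c by simp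
  have e2': "i<N \<Longrightarrow> hateta \<eta> e $ (N+i) = e * \<eta>$i" for i unfolding hateta_def using eta_c by simp
  have "hateta \<eta> e \<bullet> rh = (\<Sum>k<N+N. hateta \<eta> e $ k * rh$k)" by (rule sprod_index[OF rhc])
  also have "\<dots> = (\<Sum>k<N. (1-e) * \<eta>$k * (r0$k + 2 * T c $ k)) + (\<Sum>k<N. e * \<eta>$k * r0$k)"
    unfolding sum_split2 by (simp add: e1' e2' rh1 rh2)
  also have "\<dots> = (\<Sum>k<N. \<eta>$k * r0$k + 2 * (\<eta>$k * (c * T c $ k)))"
    unfolding sum.distrib[symmetric] by (rule sum.cong) (simp_all add: c_def algebra_simps)
  also have "\<dots> = (\<Sum>k<N. \<eta>$k * r0$k) + 2 * (\<Sum>k<N. \<eta>$k * (c * T c $ k))"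
    by (simp add: sum.distrib sum_distrib_left)
  also have "(\<Sum>k<N. \<eta>$k * r0$k) = \<eta> \<bullet> r0" using sprod_index[OF r0c] by simp
  finally show ?thesis .
qed

lemma S_vec: "vec N (\<lambda>i. \<Sum>j. (1 - e) ^ (Suc j) * ((K ^\<^sub>m j) *\<^sub>v (p1 - p0)) $ i) = vec N (\<lambda>i. c * T c $ i)"
proof (rule eq_vecI)
  fix i assume "i < dim_vec (vec N (\<lambda>i. c * T c $ i))" hence i: "i<N" by simp
  have "(\<Sum>j. (1 - e) ^ (Suc j) * ((K ^\<^sub>m j) *\<^sub>v (p1 - p0)) $ i) = (\<Sum>j. c * (c^j * xs j $ i))"
    unfolding xs_def v_def c_def by (simp add: mult.assoc)
  also have "\<dots> = c * (\<Sum>j. c^j * xs j $ i)" using suminf_mult[OF summ[OF c0 c1 i, of id]] by simp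
  finally show "vec N (\<lambda>i. \<Sum>j. (1 - e) ^ (Suc j) * ((K ^\<^sub>m j) *\<^sub>v (p1 - p0)) $ i) $ i = vec N (\<lambda>i. c * T c $ i) $ i"
    using i unfolding T_def by simp
qed simp

lemma formula: "delta (hatp p1 p0) (hatK K e) (hateta \<eta> e) =
  delta p0 K \<eta> + 4 * (\<eta> \<bullet> vec N (\<lambda>i. \<Sum>j. (1 - e) ^ (Suc j) * ((K ^\<^sub>m j) *\<^sub>v (p1 - p0)) $ i)) / nu p0 K"
proof -
  have dot: "\<eta> \<bullet> vec N (\<lambda>i. \<Sum>j. (1 - e) ^ (Suc j) * ((K ^\<^sub>m j) *\<^sub>v (p1 - p0)) $ i) = (\<Sum>k<N. \<eta>$k * (c * T c $ k))"
    unfolding S_vec using sprod_index[of "vec N (\<lambda>i. c * T c $ i)" N \<eta>] by simp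
  have "delta (hatp p1 p0) (hatK K e) (hateta \<eta> e) = 2 * (hateta \<eta> e \<bullet> rh) / nu p0 K"
    unfolding delta_def hatp_def qh_def[symmetric] rvec_h nu_h ..
  also have "\<dots> = 2 * (\<eta> \<bullet> r0) / nu p0 K + 4 * (\<Sum>k<N. \<eta>$k * (c * T c $ k)) / nu p0 K"
    unfolding etah_dot by (simp add: add_divide_distrib algebra_simps)
  also have "2 * (\<eta> \<bullet> r0) / nu p0 K = delta p0 K \<eta>" unfolding delta_def r0_def ..
  finally show ?thesis unfolding dot .
qed

end


context main
begin

lemma etac: "\<eta> \<in> carrier_vec N" using eta_distr unfolding is_distribution_def carrier_vec_def by auto
lemma eta_nn: "i<N \<Longrightarrow> \<eta>$i \<ge> 0" using eta_distr unfolding is_distribution_def by auto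
lemma eta_sum: "(\<Sum>i<N. \<eta>$i) = 1" using eta_distr unfolding is_distribution_def by auto

definition b where "b j = (\<Sum>i<N. \<eta>$i * xs j $ i)"
definition P where "P c = (\<Sum>j. b j * c^j)"

lemma b_bnd: "0 \<le> b j \<and> b j \<le> 1"
proof
  show "0 \<le> b j" unfolding b_def using eta_nn xs_bnd by (intro sum_nonneg) simp
  have "b j \<le> (\<Sum>i<N. \<eta>$i * 1)" unfolding b_def
    by (rule sum_mono) (use eta_nn xs_bnd in \<open>simp add: mult_left_le\<close>)
  thus "b j \<le> 1" using eta_sum by simp
qed

lemma summ_b: assumes "0 \<le> c" "c < 1" shows "summable (\<lambda>j. b j * c^j)"
proof (rule summable_comparison_test[of _ "\<lambda>j. c^j"])
  have "norm (b j * c^j) \<le> c^j" for j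
  proof -
    have "norm (b j * c^j) = b j * c^j" using b_bnd[of j] assms by simp
    also have "\<dots> \<le> c^j" by (rule mult_left_le_one_le) (use b_bnd[of j] assms in auto)
    finally show ?thesis .
  qed
  thus "\<exists>N0. \<forall>j\<ge>N0. norm (b j * c^j) \<le> c^j" by blast
  show "summable (\<lambda>j. c^j)" using assms by simp
qed

lemma etaT: assumes c: "0 \<le> c" "c < 1" shows "(\<Sum>k<N. \<eta>$k * T c $ k) = P c"
proof -
  have "(\<Sum>k<N. \<eta>$k * T c $ k) = (\<Sum>k<N. \<eta>$k * (\<Sum>j. c^j * xs j $ k))"
    by (rule sum.cong) (simp_all add: T_def)
  also have "\<dots> = (\<Sum>k<N. \<Sum>j. \<eta>$k * (c^j * xs j $ k))"
    by (rule sum.cong[OF refl], rule suminf_mult[symmetric], rule summ[OF c, of _ id, simplified]) simp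
  also have "\<dots> = (\<Sum>j. \<Sum>k<N. \<eta>$k * (c^j * xs j $ k))"
    by (rule suminf_sum[symmetric], rule summable_mult, rule summ[OF c, of _ id, simplified]) simp
  also have "\<dots> = P c" unfolding P_def b_def
    by (rule suminf_cong) (simp add: sum_distrib_left mult_ac)
  finally show ?thesis .
qed

lemma cT: assumes c: "0 \<le> c" "c < 1" shows "(\<Sum>k<N. \<eta>$k * (c * T c $ k)) = c * P c"
proof -
  have "(\<Sum>k<N. \<eta>$k * (c * T c $ k)) = c * (\<Sum>k<N. \<eta>$k * T c $ k)"
    by (simp add: sum_distrib_left mult_ac)
  thus ?thesis using etaT[OF c] by simp
qed

lemma delta_P: assumes e: "0 < e" "e \<le> 1"
  shows "delta (hatp p1 p0) (hatK K e) (hateta \<eta> e) = delta p0 K \<eta> + 4 * ((1-e) * P (1-e)) / nu p0 K"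
proof -
  have "main_e N K \<mu> \<eta> p0 p1 e" unfolding main_e_def main_e_axioms_def using main_axioms e by auto
  then interpret E: main_e N K \<mu> \<eta> p0 p1 e .
  have "\<eta> \<bullet> vec N (\<lambda>i. \<Sum>j. (1 - e) ^ (Suc j) * ((K ^\<^sub>m j) *\<^sub>v (p1 - p0)) $ i) = (\<Sum>k<N. \<eta>$k * (E.c * T E.c $ k))"
    unfolding E.S_vec using sprod_index[of "vec N (\<lambda>i. E.c * T E.c $ i)" N \<eta>] by simp
  also have "\<dots> = (1-e) * P (1-e)" using cT[OF E.c0 E.c1] unfolding E.c_def .
  finally show ?thesis using E.formula by simp
qed

lemma nu0_pos: "nu p0 K > 0" by (rule KK.nu_pos[OF p0_range])

definition mv where "mv = \<mu> \<bullet> v"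

lemma mv_pos: "mv > 0"
proof -
  have "mv = (\<Sum>i<N. \<mu>$i * p1$i) - (\<Sum>i<N. \<mu>$i * p0$i)"
    unfolding mv_def sprod_index[OF vc] by (simp add: v_idx right_diff_distrib sum_subtractf)
  also have "\<dots> = \<mu> \<bullet> p1 - \<mu> \<bullet> p0" using sprod_index[OF p1_dim] sprod_index[OF p0_dim] by simp
  finally show ?thesis using mu_p1 by simp
qed

lemma poisson: "\<exists>g\<in>carrier_vec N. \<forall>i<N. g$i - (K *\<^sub>v g)$i = v$i - mv"
proof -
  define qg where "qg = vec N (\<lambda>i. (v$i - mv + 1)/2)"
  have qgc: "qg \<in> carrier_vec N" unfolding qg_def by simp
  have "\<mu> \<bullet> qg = (\<Sum>i<N. \<mu>$i * qg$i)" by (rule sprod_index[OF qgc])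
  also have "\<dots> = (\<Sum>i<N. (1/2) * (\<mu>$i * v$i - mv * \<mu>$i + 1 * \<mu>$i))"
    by (rule sum.cong) (auto simp: qg_def field_simps)
  also have "\<dots> = (1/2) * (\<Sum>i<N. \<mu>$i * v$i - mv * \<mu>$i + 1 * \<mu>$i)" by (simp only: sum_distrib_left)
  also have "(\<Sum>i<N. \<mu>$i * v$i - mv * \<mu>$i + 1 * \<mu>$i) = (\<Sum>i<N. \<mu>$i * v$i) - (\<Sum>i<N. mv * \<mu>$i) + 1 * (\<Sum>i<N. \<mu>$i)"
    by (rule sum_lin3)
  also have "(\<Sum>i<N. mv * \<mu>$i) = mv * (\<Sum>i<N. \<mu>$i)" by (simp only: sum_distrib_left)
  also have "(\<Sum>i<N. \<mu>$i * v$i) = mv" unfolding mv_def using sprod_index[OF vc, of \<mu>] by simp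
  also have "(1/2) * (mv - mv * (\<Sum>i<N. \<mu>$i) + 1 * (\<Sum>i<N. \<mu>$i)) = 1/2" using KK.m_sum by simp
  finally have mq: "\<mu> \<bullet> qg = 1/2" .
  have "stoch_r N K \<mu> qg" unfolding stoch_r_def stoch_r_axioms_def
    using stK mu_dist mu_rm sdK harmK qgc mq by auto
  then interpret KQ: stoch_r N K \<mu> qg .
  define g where "g = r_vec qg K"
  have "KQ.good g" unfolding g_def by (rule KQ.r_vec_good)
  hence gc: "g \<in> carrier_vec N" and ge: "\<And>i. i<N \<Longrightarrow> g$i - (K *\<^sub>v g)$i = 2 * qg$i - 1"
    unfolding KQ.good_def by auto
  show ?thesis
  proof (intro bexI[of _ g] allI impI)
    fix i assume i: "i<N"
    show "g$i - (K *\<^sub>v g)$i = v$i - mv" using ge[OF i] i unfolding qg_def by (simp add: field_simps)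
  qed (rule gc)
qed

lemma T_lower: "\<exists>G\<ge>0. \<forall>c. 0 \<le> c \<and> c < 1 \<longrightarrow> (\<forall>i<N. T c $ i \<ge> mv/(1-c) - G)"
proof -
  obtain g where gc: "g \<in> carrier_vec N" and geq: "\<And>i. i<N \<Longrightarrow> g$i - (K *\<^sub>v g)$i = v$i - mv"
    using poisson by blast
  define Gs where "Gs = (\<Sum>j<N. \<bar>g$j\<bar>)"
  have gG: "\<bar>g$j\<bar> \<le> Gs" if "j<N" for j unfolding Gs_def by (rule member_le_sum) (use that in auto)
  have Gs0: "Gs \<ge> 0" unfolding Gs_def by (simp add: sum_nonneg)
  have KgG: "\<bar>(K *\<^sub>v g)$i\<bar> \<le> Gs" if "i<N" for i by (rule KK.mv_abs[OF gc gG that])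
  have "\<forall>c. 0 \<le> c \<and> c < 1 \<longrightarrow> (\<forall>i<N. T c $ i \<ge> mv/(1-c) - 2*Gs)"
  proof (rule allI, rule impI)
    fix c :: real assume c: "0 \<le> c \<and> c < 1"
    hence c0: "0 \<le> c" and c1: "c < 1" by auto
    define Z where "Z = T c - g"
    have Zc: "Z \<in> carrier_vec N" unfolding Z_def using Tc gc by simp
    have Zi: "Z$i = T c $ i - g$i" if "i<N" for i unfolding Z_def using that gc by simp
    have Zeq: "Z$i - c * (K *\<^sub>v Z)$i = mv - (1-c) * (K *\<^sub>v g)$i" if i: "i<N" for i
    proof -
      have "(K *\<^sub>v Z)$i = (K *\<^sub>v T c)$i - (K *\<^sub>v g)$i" unfolding Z_def by (rule KK.mv_sub[OF Tc gc i])
      hence KT: "(K *\<^sub>v T c)$i = (K *\<^sub>v Z)$i + (K *\<^sub>v g)$i" by simp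
      have cKT: "c * (K *\<^sub>v T c)$i = c * (K *\<^sub>v Z)$i + c * (K *\<^sub>v g)$i" unfolding KT by (simp add: distrib_left)
      have "(1-c) * (K *\<^sub>v g)$i = (K *\<^sub>v g)$i - c * (K *\<^sub>v g)$i" by (simp add: algebra_simps)
      thus ?thesis using Zi[OF i] T_eq[OF c0 c1 i] geq[OF i] cKT by linarith
    qed
    define z0 where "z0 = Min ((\<lambda>i. Z$i) ` {..<N})"
    have z0le: "z0 \<le> Z$j" if "j<N" for j unfolding z0_def using that by auto
    have "z0 \<in> (\<lambda>i. Z$i) ` {..<N}" unfolding z0_def using N_pos by (intro Min_in) auto
    then obtain i0 where i0: "i0<N" "Z$i0 = z0" by auto
    have KZ: "(K *\<^sub>v Z)$i0 \<ge> z0" by (rule KK.mv_ge[OF Zc z0le i0(1)])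
    have "c * z0 \<le> c * (K *\<^sub>v Z)$i0" by (rule mult_left_mono[OF KZ c0])
    moreover have "(1-c) * (K *\<^sub>v g)$i0 \<le> (1-c) * Gs"
      using KgG[OF i0(1)] c1 by (intro mult_left_mono) auto
    ultimately have "z0 - c * z0 \<ge> mv - (1-c) * Gs" using Zeq[OF i0(1)] i0(2) by linarith
    hence "(1-c) * z0 \<ge> mv - (1-c) * Gs" by (simp add: algebra_simps)
    moreover have "(1-c) * (mv/(1-c) - Gs) = mv - (1-c) * Gs" using c1 by (simp add: field_simps)
    ultimately have "(1-c) * z0 \<ge> (1-c) * (mv/(1-c) - Gs)" by simp
    hence z0b: "z0 \<ge> mv/(1-c) - Gs" using c1 by (simp add: mult_le_cancel_left_pos)
    show "\<forall>i<N. T c $ i \<ge> mv/(1-c) - 2*Gs"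
    proof (intro allI impI)
      fix i assume i: "i<N"
      have "T c $ i = Z$i + g$i" using Zi[OF i] by simp
      moreover have "g$i \<ge> -Gs" using gG[OF i] by linarith
      ultimately show "T c $ i \<ge> mv/(1-c) - 2*Gs" using z0le[OF i] z0b by linarith
    qed
  qed
  thus ?thesis using Gs0 by (intro exI[of _ "2*Gs"]) auto
qed

lemma P_lower: "\<exists>G\<ge>0. \<forall>c. 0 \<le> c \<and> c < 1 \<longrightarrow> P c \<ge> mv/(1-c) - G"
proof -
  obtain G where G0: "G \<ge> 0" and TG: "\<forall>c. 0 \<le> c \<and> c < 1 \<longrightarrow> (\<forall>i<N. T c $ i \<ge> mv/(1-c) - G)"
    using T_lower by blast
  have "P c \<ge> mv/(1-c) - G" if c: "0 \<le> c" "c < 1" for c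
  proof -
    have "(\<Sum>k<N. \<eta>$k * (mv/(1-c) - G)) \<le> (\<Sum>k<N. \<eta>$k * T c $ k)"
      by (rule sum_mono) (use TG c eta_nn in \<open>auto intro: mult_left_mono\<close>)
    moreover have "(\<Sum>k<N. \<eta>$k * (mv/(1-c) - G)) = mv/(1-c) - G"
      using eta_sum by (simp add: sum_distrib_right[symmetric])
    ultimately show ?thesis using etaT[OF c] by simp
  qed
  thus ?thesis using G0 by blast
qed

lemma b_pos: "\<exists>j. b j > 0"
proof -
  obtain G where G0: "G \<ge> 0" and PG: "\<forall>c. 0 \<le> c \<and> c < 1 \<longrightarrow> P c \<ge> mv/(1-c) - G"
    using P_lower by blast
  define e where "e = mv / (2 * (G + mv))"
  have e0: "e > 0" unfolding e_def using mv_pos G0 by simp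
  have e1: "e < 1" unfolding e_def using mv_pos G0 by (simp add: divide_less_eq)
  have "mv / e = 2 * (G + mv)" unfolding e_def using mv_pos G0 by simp
  hence "P (1 - e) \<ge> 2 * (G + mv) - G" using PG[rule_format, of "1-e"] e0 e1 by simp
  moreover have "2 * (G + mv) - G > 0" using mv_pos G0 by simp
  ultimately have Ppos: "P (1 - e) > 0" by linarith
  show ?thesis
  proof (rule ccontr)
    assume "\<not> ?thesis"
    hence "\<forall>j. b j = 0" using b_bnd by (metis order.not_eq_order_implies_strict)
    hence "P (1 - e) = 0" unfolding P_def by simp
    thus False using Ppos by simp
  qed
qed

lemma F_eq: assumes "0 \<le> c" "c < 1" shows "c * P c = (\<Sum>j. b j * c^(Suc j))"
  unfolding P_def using suminf_mult[OF summ_b[OF assms], of c] by (simp add: mult_ac)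

lemma F_strict: assumes c: "0 \<le> c1" "c1 < c2" "c2 < 1" shows "c1 * P c1 < c2 * P c2"
proof -
  obtain j0 where j0: "b j0 > 0" using b_pos by blast
  have s1: "summable (\<lambda>j. b j * c1^(Suc j))" using summable_mult[OF summ_b[of c1], of c1] c
    by (simp add: mult_ac)
  have s2: "summable (\<lambda>j. b j * c2^(Suc j))" using summable_mult[OF summ_b[of c2], of c2] c
    by (simp add: mult_ac)
  have "0 < (\<Sum>j. b j * c2^(Suc j) - b j * c1^(Suc j))"
  proof (rule suminf_pos2)
    show "summable (\<lambda>j. b j * c2^(Suc j) - b j * c1^(Suc j))" by (rule summable_diff[OF s2 s1])
    show "0 \<le> b j * c2^(Suc j) - b j * c1^(Suc j)" for j
    proof -
      have "c1^(Suc j) \<le> c2^(Suc j)" using c by (intro power_mono) auto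
      thus ?thesis using b_bnd[of j] by (simp add: mult_left_mono)
    qed
    have "c1^(Suc j0) < c2^(Suc j0)" using c by (intro power_strict_mono) auto
    thus "0 < b j0 * c2^(Suc j0) - b j0 * c1^(Suc j0)" using j0 by simp
  qed
  also have "\<dots> = c2 * P c2 - c1 * P c1"
    using suminf_diff[OF s2 s1] F_eq[of c1] F_eq[of c2] c by simp
  finally show ?thesis by simp
qed

lemma P_cont: assumes "0 \<le> c0" "c0 < 1" shows "isCont P c0"
proof -
  define K0 where "K0 = (1 + c0)/2"
  have "summable (\<lambda>j. b j * K0^j)" using summ_b[of K0] assms unfolding K0_def by simp
  moreover have "norm c0 < norm K0" using assms unfolding K0_def by simp
  ultimately have "isCont (\<lambda>x. \<Sum>j. b j * x^j) c0" by (rule isCont_powser)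
  thus ?thesis unfolding P_def[abs_def] .
qed

end


context main
begin

lemma main_result:
  shows "(\<forall>\<epsilon>\<in>{0<..1}.
            delta (hatp p1 p0) (hatK K \<epsilon>) (hateta \<eta> \<epsilon>) =
              delta p0 K \<eta> +
              4 * (\<eta> \<bullet> vec N (\<lambda>i. \<Sum>j. (1 - \<epsilon>) ^ (Suc j) * ((K ^\<^sub>m j) *\<^sub>v (p1 - p0)) $ i))
                / nu p0 K)
      \<and> continuous_on {0<..1} (\<lambda>\<epsilon>. delta (hatp p1 p0) (hatK K \<epsilon>) (hateta \<eta> \<epsilon>))
      \<and> (\<forall>a b. 0 < a \<and> a < b \<and> b \<le> 1 \<longrightarrow>
            delta (hatp p1 p0) (hatK K b) (hateta \<eta> b) < delta (hatp p1 p0) (hatK K a) (hateta \<eta> a))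
      \<and> delta (hatp p1 p0) (hatK K 1) (hateta \<eta> 1) = delta p0 K \<eta>
      \<and> filterlim (\<lambda>\<epsilon>. delta (hatp p1 p0) (hatK K \<epsilon>) (hateta \<eta> \<epsilon>)) at_top (at_right 0)"
proof (intro conjI)
  define dh where "dh \<epsilon> = delta (hatp p1 p0) (hatK K \<epsilon>) (hateta \<eta> \<epsilon>)" for \<epsilon>
  define d0 where "d0 = delta p0 K \<eta>"
  define n0 where "n0 = nu p0 K"
  have n0p: "n0 > 0" unfolding n0_def by (rule nu0_pos)
  have dP: "dh e = d0 + 4 * ((1-e) * P (1-e)) / n0" if "0 < e" "e \<le> 1" for e
    unfolding dh_def d0_def n0_def by (rule delta_P[OF that])
  show "\<forall>\<epsilon>\<in>{0<..1}. delta (hatp p1 p0) (hatK K \<epsilon>) (hateta \<eta> \<epsilon>) =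
              delta p0 K \<eta> +
              4 * (\<eta> \<bullet> vec N (\<lambda>i. \<Sum>j. (1 - \<epsilon>) ^ (Suc j) * ((K ^\<^sub>m j) *\<^sub>v (p1 - p0)) $ i))
                / nu p0 K"
  proof
    fix e :: real assume "e \<in> {0<..1}"
    hence "main_e N K \<mu> \<eta> p0 p1 e" unfolding main_e_def main_e_axioms_def using main_axioms by auto
    thus "delta (hatp p1 p0) (hatK K e) (hateta \<eta> e) =
              delta p0 K \<eta> +
              4 * (\<eta> \<bullet> vec N (\<lambda>i. \<Sum>j. (1 - e) ^ (Suc j) * ((K ^\<^sub>m j) *\<^sub>v (p1 - p0)) $ i))
                / nu p0 K" by (rule main_e.formula)
  qed
  have cont: "continuous_on {0<..1} (\<lambda>e. d0 + 4 * ((1-e) * P (1-e)) / n0)"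
  proof (rule continuous_at_imp_continuous_on, rule ballI)
    fix e0 :: real assume "e0 \<in> {0<..1}"
    hence "0 \<le> 1 - e0" "1 - e0 < 1" by auto
    hence "isCont P (1 - e0)" by (rule P_cont)
    hence "isCont (\<lambda>e. P (1 - e)) e0" by (intro isCont_o2[where f="\<lambda>e. 1 - e" and a=e0 and g=P]) (auto intro!: continuous_intros)
    thus "isCont (\<lambda>e. d0 + 4 * ((1-e) * P (1-e)) / n0) e0" using n0p by (auto intro!: continuous_intros)
  qed
  show "continuous_on {0<..1} (\<lambda>\<epsilon>. delta (hatp p1 p0) (hatK K \<epsilon>) (hateta \<eta> \<epsilon>))"
    using cont unfolding dh_def[symmetric] by (rule continuous_on_cong[THEN iffD1, OF refl, rotated]) (simp add: dP)
  show "\<forall>a b. 0 < a \<and> a < b \<and> b \<le> 1 \<longrightarrow>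
            delta (hatp p1 p0) (hatK K b) (hateta \<eta> b) < delta (hatp p1 p0) (hatK K a) (hateta \<eta> a)"
  proof (intro allI impI)
    fix a b :: real assume ab: "0 < a \<and> a < b \<and> b \<le> 1"
    have "(1-b) * P (1-b) < (1-a) * P (1-a)" using ab by (intro F_strict) auto
    hence "4 * ((1-b) * P (1-b)) / n0 < 4 * ((1-a) * P (1-a)) / n0" using n0p by (simp add: divide_strict_right_mono)
    thus "delta (hatp p1 p0) (hatK K b) (hateta \<eta> b) < delta (hatp p1 p0) (hatK K a) (hateta \<eta> a)"
      using dP[of a] dP[of b] ab unfolding dh_def by simp
  qed
  show "delta (hatp p1 p0) (hatK K 1) (hateta \<eta> 1) = delta p0 K \<eta>"
    using dP[of 1] unfolding dh_def d0_def by simp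
  obtain G where G0: "G \<ge> 0" and PG: "\<forall>c. 0 \<le> c \<and> c < 1 \<longrightarrow> P c \<ge> mv/(1-c) - G"
    using P_lower by blast
  define L where "L e = (d0 + 4*(e*G - mv - G)/n0) + (4*mv/n0) * inverse e" for e
  have Llim: "filterlim L at_top (at_right 0)"
  proof -
    have t: "((\<lambda>e. d0 + 4*(e*G - mv - G)/n0) \<longlongrightarrow> d0 + 4*(0*G - mv - G)/n0) (at_right 0)"
      by (intro tendsto_intros) (use n0p in auto)
    have f: "filterlim (\<lambda>e. (4*mv/n0) * inverse e) at_top (at_right (0::real))"
      by (rule filterlim_tendsto_pos_mult_at_top[OF tendsto_const _ filterlim_inverse_at_top_right])
         (simp add: mv_pos n0p)
    show ?thesis unfolding L_def[abs_def] by (rule filterlim_tendsto_add_at_top[OF t f])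
  qed
  have ev01: "eventually (\<lambda>x. x \<in> {0<..<1}) (at_right (0::real))" by (rule eventually_at_right_real) simp
  have ev: "eventually (\<lambda>e. L e \<le> dh e) (at_right 0)"
    using ev01
  proof (rule eventually_mono)
    fix e :: real assume "e \<in> {0<..<1}"
    hence e: "0 < e" "e < 1" by auto
    have "P (1-e) \<ge> mv/e - G" using PG[rule_format, of "1-e"] e by simp
    hence "(1-e) * (mv/e - G) \<le> (1-e) * P (1-e)" using e by (intro mult_left_mono) auto
    hence "d0 + 4 * ((1-e) * (mv/e - G)) / n0 \<le> d0 + 4 * ((1-e) * P (1-e)) / n0"
      using n0p by (simp add: divide_right_mono)
    moreover have "L e = d0 + 4 * ((1-e) * (mv/e - G)) / n0"
      unfolding L_def using e n0p by (simp add: field_simps)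
    ultimately show "L e \<le> dh e" using dP[of e] e by simp
  qed
  show "filterlim (\<lambda>\<epsilon>. delta (hatp p1 p0) (hatK K \<epsilon>) (hateta \<eta> \<epsilon>)) at_top (at_right 0)"
    using filterlim_at_top_mono[OF Llim ev] unfolding dh_def .
qed

end

theorem lemma5p1:
  fixes N :: nat and K :: "real mat" and \<mu> \<eta> p0 p1 :: "real vec"
  assumes K_carrier: "K \<in> carrier_mat N N"
    and K_stoch: "stochastic_mat K"
    and K_class: "\<exists>!C. closed_irreducible K C"
    and mu_stat: "stationary K \<mu>"
    and mu_unique: "\<And>m. stationary K m \<Longrightarrow> m = \<mu>"
    and p0_dim: "p0 \<in> carrier_vec N" and p1_dim: "p1 \<in> carrier_vec N"
    and p0_range: "\<And>i. i < N \<Longrightarrow> 0 < p0 $ i \<and> p0 $ i < 1"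
    and p1_range: "\<And>i. i < N \<Longrightarrow> 0 < p1 $ i \<and> p1 $ i < 1"
    and p_mono: "\<And>i. i < N \<Longrightarrow> p1 $ i \<ge> p0 $ i"
    and mu_p0: "\<mu> \<bullet> p0 = 1/2"
    and mu_p1: "\<mu> \<bullet> p1 > \<mu> \<bullet> p0"
    and eta_distr: "is_distribution N \<eta>"
  shows "(\<forall>\<epsilon>\<in>{0<..1}.
            delta (hatp p1 p0) (hatK K \<epsilon>) (hateta \<eta> \<epsilon>) =
              delta p0 K \<eta> +
              4 * (\<eta> \<bullet> vec N (\<lambda>i. \<Sum>j. (1 - \<epsilon>) ^ (Suc j) * ((K ^\<^sub>m j) *\<^sub>v (p1 - p0)) $ i))
                / nu p0 K)
      \<and> continuous_on {0<..1} (\<lambda>\<epsilon>. delta (hatp p1 p0) (hatK K \<epsilon>) (hateta \<eta> \<epsilon>))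
      \<and> (\<forall>a b. 0 < a \<and> a < b \<and> b \<le> 1 \<longrightarrow>
            delta (hatp p1 p0) (hatK K b) (hateta \<eta> b) < delta (hatp p1 p0) (hatK K a) (hateta \<eta> a))
      \<and> delta (hatp p1 p0) (hatK K 1) (hateta \<eta> 1) = delta p0 K \<eta>
      \<and> filterlim (\<lambda>\<epsilon>. delta (hatp p1 p0) (hatK K \<epsilon>) (hateta \<eta> \<epsilon>)) at_top (at_right 0)"
proof -
  have "main N K \<mu> \<eta> p0 p1"
    unfolding main_def using assms by blast
  thus ?thesis by (rule main.main_result)
qed


end
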